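(* Repeatedly choose independent uniformly random breaking points in $[0,1]$, each new point further subdividing the current partition of $[0,1]$ into segments, and stop as soon as some three of the current segments can form a triangle. Let $X$ be the number of breaking points chosen. Then $\mathbb E[X] \le 3.398$.
   Context: Three lengths form a triangle iff each is less than the sum of the other two. *)

theory Defs
  imports "HOL-Probability.Probability"
begin

definition is_triangle :: "real \<Rightarrow> real \<Rightarrow> real \<Rightarrow> bool" where
  "is_triangle a b c \<longleftrightarrow> a < b + c \<and> b < a + c \<and> c < a + b"

definition seg_lengths :: "(nat \<Rightarrow> real) \<Rightarrow> nat \<Rightarrow> real list" where
  "seg_lengths \<omega> n =
     (let xs = sort (0 # 1 # map \<omega> [0..<n])
      in map (\<lambda>i. xs ! Suc i - xs ! i) [0..<Suc n])"

definition has_triangle :: "real list \<Rightarrow> bool" where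
  "has_triangle ls \<longleftrightarrow>
     (\<exists>i j k. i < length ls \<and> j < length ls \<and> k < length ls \<and>
              i \<noteq> j \<and> i \<noteq> k \<and> j \<noteq> k \<and> is_triangle (ls ! i) (ls ! j) (ls ! k))"

definition stop_time :: "(nat \<Rightarrow> real) \<Rightarrow> ennreal" where
  "stop_time \<omega> =
     (if \<exists>n. has_triangle (seg_lengths \<omega> n)
      then of_nat (LEAST n. has_triangle (seg_lengths \<omega> n)) else \<infinity>)"

definition break_space :: "(nat \<Rightarrow> real) measure" where
  "break_space = (\<Pi>\<^sub>M i\<in>(UNIV :: nat set). uniform_measure lborel {0..1::real})"

end

theory Submission
  imports Defs
begin

abbreviation LL :: "nat set \<Rightarrow> (nat \<Rightarrow> real) measure" where
  "LL I \<equiv> PiM I (\<lambda>_. lborel)"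

definition triT :: "nat \<Rightarrow> (nat \<Rightarrow> nat) \<Rightarrow> (nat \<Rightarrow> real) \<Rightarrow> (nat \<Rightarrow> real) \<Rightarrow> (nat \<Rightarrow> nat \<Rightarrow> real)
   \<Rightarrow> (nat \<Rightarrow> real) \<Rightarrow> (nat \<Rightarrow> real)" where
  "triT m \<tau> a b e x = (\<lambda>k\<in>{..<m}. a k * x (\<tau> k) + b k + (\<Sum>j<k. e k j * x (\<tau> j)))"

lemma triT_meas:
  assumes "\<tau> ` {..<m} \<subseteq> J"
  shows "triT m \<tau> a b e \<in> measurable (LL J) (LL {..<m})"
  unfolding triT_def
proof (rule measurable_restrict)
  fix k assume k: "k \<in> {..<m}"
  have "\<tau> k \<in> J" using assms k by auto
  moreover have "\<forall>j<k. \<tau> j \<in> J" using assms k by auto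
  ultimately show "(\<lambda>x. a k * x (\<tau> k) + b k + (\<Sum>j<k. e k j * x (\<tau> j))) \<in> measurable (LL J) lborel"
  proof -
    have c: "(\<lambda>x. x i) \<in> borel_measurable (LL J)" if "i \<in> J" for i
      using measurable_component_singleton[OF that, of "\<lambda>_. lborel"] by (simp add: measurable_lborel1)
    show ?thesis
      apply (subst measurable_lborel1)
      apply (intro borel_measurable_add borel_measurable_sum borel_measurable_times
          borel_measurable_const c)
      using \<open>\<tau> k \<in> J\<close> \<open>\<forall>j<k. \<tau> j \<in> J\<close> by auto
  qed
qed

lemma meas_upd_int:
  assumes g: "g \<in> borel_measurable (LL (insert i I))"
  shows "(\<lambda>x. \<integral>\<^sup>+y. g (x(i := y)) \<partial>lborel) \<in> borel_measurable (LL I)"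
proof -
  interpret lborel: sigma_finite_measure "lborel :: real measure" by standard
  have "(\<lambda>p. g ((fst p)(i := snd p))) \<in> borel_measurable (LL I \<Otimes>\<^sub>M lborel)"
    using measurable_compose[OF measurable_add_dim g] by (simp add: case_prod_beta')
  then show ?thesis
    using lborel.borel_measurable_nn_integral_fst by fastforce
qed

lemma tri_main:
  fixes g :: "(nat \<Rightarrow> real) \<Rightarrow> ennreal"
  assumes inj: "inj_on \<tau> {..<n}" and a: "\<And>k. k < n \<Longrightarrow> a k \<noteq> 0" and mn: "m \<le> n"
    and g: "g \<in> borel_measurable (LL {..<m})"
  shows "(\<integral>\<^sup>+x. g (triT m \<tau> a b e x) \<partial>LL (\<tau> ` {..<m})) * (\<Prod>k<m. ennreal \<bar>a k\<bar>)
         = (\<integral>\<^sup>+x. g x \<partial>LL {..<m})"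
  using mn g
proof (induction m arbitrary: g)
  case 0
  interpret product_sigma_finite "\<lambda>_::nat. lborel::real measure" by standard
  show ?case by (simp add: PiM_empty nn_integral_count_space_finite triT_def)
next
  case (Suc m)
  interpret product_sigma_finite "\<lambda>_::nat. lborel::real measure" by standard
  let ?I = "\<tau> ` {..<m}"
  let ?i = "\<tau> m"
  have m: "m < n" using Suc by simp
  have ne: "\<And>k. k < m \<Longrightarrow> \<tau> k \<noteq> \<tau> m"
    using inj m by (auto simp: inj_on_def)
  have iI: "?i \<notin> ?I" using ne by (metis imageE lessThan_iff)
  have ins: "\<tau> ` {..<Suc m} = insert ?i ?I" by (simp add: lessThan_Suc)
  have fin: "finite ?I" by simp
  define \<beta> where "\<beta> x = b m + (\<Sum>j<m. e m j * x (\<tau> j))" for x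
  have upd: "triT (Suc m) \<tau> a b e (x(?i := y)) = (triT m \<tau> a b e x)(m := a m * y + \<beta> x)" for x y
  proof
    fix k
    show "triT (Suc m) \<tau> a b e (x(?i := y)) k = ((triT m \<tau> a b e x)(m := a m * y + \<beta> x)) k"
    proof (cases "k < m")
      case True
      then have "(\<Sum>j<k. e k j * (x(?i := y)) (\<tau> j)) = (\<Sum>j<k. e k j * x (\<tau> j))"
        using ne by (intro sum.cong) auto
      with True ne show ?thesis by (simp add: triT_def)
    next
      case False
      then show ?thesis
        using ne by (auto simp: triT_def \<beta>_def intro!: sum.cong)
    qed
  qed
  have gS: "g \<in> borel_measurable (LL (insert m {..<m}))"
    using Suc.prems(2) by (simp add: lessThan_Suc)
  have Gm: "(\<lambda>x. g (triT (Suc m) \<tau> a b e x)) \<in> borel_measurable (LL (insert ?i ?I))"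
    using measurable_compose[OF triT_meas[where m="Suc m" and \<tau>=\<tau> and J="insert ?i ?I" and a=a and b=b and e=e] Suc.prems(2)] ins
    by simp
  define H where "H z = (\<integral>\<^sup>+y. g (z(m := y)) \<partial>lborel)" for z
  have Hm: "H \<in> borel_measurable (LL {..<m})"
    unfolding H_def using meas_upd_int[OF gS] .
  have Fm: "(\<lambda>x. \<integral>\<^sup>+y. g (triT (Suc m) \<tau> a b e (x(?i := y))) \<partial>lborel) \<in> borel_measurable (LL ?I)"
    using meas_upd_int[OF Gm] .
  have inner: "(\<integral>\<^sup>+y. g (triT (Suc m) \<tau> a b e (x(?i := y))) \<partial>lborel) * ennreal \<bar>a m\<bar>
      = H (triT m \<tau> a b e x)" if x: "x \<in> space (LL ?I)" for x
  proof -
    have tx: "triT m \<tau> a b e x \<in> space (LL {..<m})"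
      using measurable_space[OF triT_meas[where m=m and \<tau>=\<tau> and J="?I" and a=a and b=b and e=e] x] by simp
    have hm: "(\<lambda>y. g ((triT m \<tau> a b e x)(m := y))) \<in> borel_measurable borel"
      using measurable_compose[OF measurable_component_update[OF tx, of m] gS] by simp
    have "H (triT m \<tau> a b e x) = ennreal \<bar>a m\<bar> *
        (\<integral>\<^sup>+y. g ((triT m \<tau> a b e x)(m := \<beta> x + a m * y)) \<partial>lborel)"
      unfolding H_def by (rule nn_integral_real_affine[OF hm a[OF m]])
    then show ?thesis
      by (simp add: upd add.commute mult.commute)
  qed
  have "(\<integral>\<^sup>+x. g (triT (Suc m) \<tau> a b e x) \<partial>LL (\<tau> ` {..<Suc m})) * (\<Prod>k<Suc m. ennreal \<bar>a k\<bar>)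
      = (\<integral>\<^sup>+x. (\<integral>\<^sup>+y. g (triT (Suc m) \<tau> a b e (x(?i := y))) \<partial>lborel) \<partial>LL ?I)
          * ennreal \<bar>a m\<bar> * (\<Prod>k<m. ennreal \<bar>a k\<bar>)"
    unfolding ins by (subst product_nn_integral_insert[OF fin iI Gm]) (simp add: ac_simps)
  also have "\<dots> = (\<integral>\<^sup>+x. (\<integral>\<^sup>+y. g (triT (Suc m) \<tau> a b e (x(?i := y))) \<partial>lborel) * ennreal \<bar>a m\<bar> \<partial>LL ?I)
          * (\<Prod>k<m. ennreal \<bar>a k\<bar>)"
    by (subst nn_integral_multc[OF Fm]) simp
  also have "\<dots> = (\<integral>\<^sup>+x. H (triT m \<tau> a b e x) \<partial>LL ?I) * (\<Prod>k<m. ennreal \<bar>a k\<bar>)"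
    by (intro arg_cong2[where f="(*)"] nn_integral_cong inner) auto
  also have "\<dots> = (\<integral>\<^sup>+x. H x \<partial>LL {..<m})"
    using Suc.IH[OF _ Hm] Suc.prems by simp
  also have "\<dots> = (\<integral>\<^sup>+x. g x \<partial>LL (insert m {..<m}))"
    unfolding H_def by (rule product_nn_integral_insert[symmetric]) (auto simp: gS)
  finally show ?case by (simp add: lessThan_Suc)
qed

lemma tri_full:
  fixes g :: "(nat \<Rightarrow> real) \<Rightarrow> ennreal"
  assumes inj: "inj_on \<tau> {..<n}" and im: "\<tau> ` {..<n} \<subseteq> {..<n}" and a: "\<And>k. k < n \<Longrightarrow> a k \<noteq> 0"
    and g: "g \<in> borel_measurable (LL {..<n})"
  shows "(\<integral>\<^sup>+x. g (triT n \<tau> a b e x) \<partial>LL {..<n}) * (\<Prod>k<n. ennreal \<bar>a k\<bar>)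
         = (\<integral>\<^sup>+x. g x \<partial>LL {..<n})"
proof -
  have "\<tau> ` {..<n} = {..<n}" using endo_inj_surj[OF _ im inj] by simp
  then show ?thesis using tri_main[OF inj a order_refl g] by simp
qed

definition simp_set :: "nat \<Rightarrow> (nat \<Rightarrow> real) set" where
  "simp_set n = {x. (\<forall>i\<in>{..<n}. 0 \<le> x i) \<and> sum x {..<n} \<le> 1} \<inter> space (LL {..<n})"

lemma simp_set_sets: "simp_set n \<in> sets (LL {..<n})"
proof -
  have "simp_set n = Pi\<^sub>E {..<n} (\<lambda>_. {0..}) \<inter> (\<lambda>x. sum x {..<n}) -` {..1} \<inter> space (LL {..<n})"
    by (auto simp: simp_set_def space_PiM)
  also have "\<dots> \<in> sets (LL {..<n})"
    by measurable
  finally show ?thesis .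
qed

lemma simp_set_emeasure: "emeasure (LL {..<n}) (simp_set n) = ennreal (1 / fact n)"
  unfolding simp_set_def using emeasure_std_simplex_aux[of "{..<n}" 1] by simp


definition sp :: "nat \<Rightarrow> (nat \<Rightarrow> nat) \<Rightarrow> (nat \<Rightarrow> real) \<Rightarrow> nat \<Rightarrow> real" where
  "sp n \<sigma> x i = (if i < n then x (\<sigma> i) else 1) - (if i = 0 then 0 else x (\<sigma> (i - 1)))"

definition lv where "lv n \<sigma> \<pi> x j = sp n \<sigma> x (\<pi> j)"

definition dd where
  "dd n \<sigma> \<pi> x j = lv n \<sigma> \<pi> x j - (if 1 \<le> j then lv n \<sigma> \<pi> x (j - 1) else 0)
      - (if 2 \<le> j then lv n \<sigma> \<pi> x (j - 2) else 0)"

definition fcone :: "nat \<Rightarrow> (nat \<Rightarrow> nat) \<Rightarrow> (nat \<Rightarrow> nat) \<Rightarrow> (nat \<Rightarrow> real) \<Rightarrow> (nat \<Rightarrow> real) set" where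
  "fcone n \<sigma> \<pi> w = {x \<in> space (LL {..<n}). (\<forall>j<n. 0 \<le> dd n \<sigma> \<pi> x j) \<and> (\<Sum>j<n. w j * dd n \<sigma> \<pi> x j) \<le> 1}"

definition kap :: "nat \<Rightarrow> nat \<Rightarrow> nat \<Rightarrow> nat" where
  "kap r n m = (if m < r then m else n + r - m)"

definition phi1 where
  "phi1 n \<sigma> r = triT n (\<lambda>k. \<sigma> (if k < r then k else n - 1 + r - k)) (\<lambda>k. if k < r then 1 else -1)
      (\<lambda>k. if k = r then 1 else 0) (\<lambda>k j. if j + 1 = k then (if k < r then -1 else if k = r then 0 else 1) else 0)"

definition phi2 where
  "phi2 n \<pi> r w = triT n (\<lambda>j. kap r n (\<pi> j)) w (\<lambda>_. 0)
      (\<lambda>j i. (if i + 1 = j then - w j else 0) + (if i + 2 = j then - w j else 0))"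

lemma sum_delta_gen:
  fixes k d :: nat
  assumes "0 < d"
  shows "(\<Sum>j<k. (if j + d = k then c else 0) * f j) = (if d \<le> k then c * f (k - d) else (0::real))"
proof -
  have "(\<Sum>j<k. (if j + d = k then c else 0) * f j) = (\<Sum>j<k. if j = k - d then (if d \<le> k then c * f j else 0) else 0)"
    by (intro sum.cong) auto
  also have "\<dots> = (if d \<le> k then c * f (k - d) else 0)"
    using assms by (subst sum.delta) auto
  finally show ?thesis .
qed

lemma sum_delta1: "(\<Sum>j<k. (if Suc j = k then c else 0) * f j) = (if 0 < k then c * f (k - 1) else (0::real))"
  using sum_delta_gen[of 1 k c f] by auto

lemma sum_delta2: "(\<Sum>j<k. (if Suc (Suc j) = k then c else 0) * f j) = (if 2 \<le> k then c * f (k - 2) else (0::real))"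
  using sum_delta_gen[of 2 k c f] by (simp add: numeral_2_eq_2)

lemma phi1_val:
  assumes "k < n" "r \<le> n"
  shows "phi1 n \<sigma> r x k = sp n \<sigma> x (kap r n k)"
  using assms
  by (auto simp: phi1_def triT_def sum_delta1 sp_def kap_def)

lemma kap_lt: "m \<le> n \<Longrightarrow> m \<noteq> r \<Longrightarrow> r \<le> n \<Longrightarrow> kap r n m < n"
  by (auto simp: kap_def)

lemma kap_kap: "m \<le> n \<Longrightarrow> m \<noteq> r \<Longrightarrow> r \<le> n \<Longrightarrow> kap r n (kap r n m) = m"
  by (auto simp: kap_def)

lemma phi2_val:
  assumes "j < n"
  shows "phi2 n \<pi> r w u j = w j * u (kap r n (\<pi> j))
     - (if 1 \<le> j then w j * u (kap r n (\<pi> (j - 1))) else 0)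
     - (if 2 \<le> j then w j * u (kap r n (\<pi> (j - 2))) else 0)"
proof -
  have "(\<Sum>i<j. ((if i + 1 = j then - w j else 0) + (if i + 2 = j then - w j else 0)) * u (kap r n (\<pi> i)))
      = (\<Sum>i<j. (if i + 1 = j then - w j else 0) * u (kap r n (\<pi> i)))
        + (\<Sum>i<j. (if i + 2 = j then - w j else 0) * u (kap r n (\<pi> i)))"
    by (simp only: distrib_right sum.distrib)
  also have "\<dots> = (if 1 \<le> j then - w j * u (kap r n (\<pi> (j - 1))) else 0)
      + (if 2 \<le> j then - w j * u (kap r n (\<pi> (j - 2))) else 0)"
    by (simp only: sum_delta_gen[of 1] sum_delta_gen[of 2] zero_less_one zero_less_numeral)
  finally have *: "(\<Sum>i<j. ((if i + 1 = j then - w j else 0) + (if i + 2 = j then - w j else 0)) * u (kap r n (\<pi> i)))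
     = (if 1 \<le> j then - w j * u (kap r n (\<pi> (j - 1))) else 0)
      + (if 2 \<le> j then - w j * u (kap r n (\<pi> (j - 2))) else 0)" .
  have "phi2 n \<pi> r w u j = w j * u (kap r n (\<pi> j)) + 0 +
     (\<Sum>i<j. ((if i + 1 = j then - w j else 0) + (if i + 2 = j then - w j else 0)) * u (kap r n (\<pi> i)))"
    using assms unfolding phi2_def triT_def by simp
  then show ?thesis unfolding * by simp
qed

lemma perm_facts:
  fixes n j :: nat
  assumes "\<pi> permutes {..n}" "j < n"
  shows "\<pi> j \<le> n" "\<pi> j \<noteq> \<pi> n"
proof -
  have "j \<in> {..n}" using assms(2) by simp
  then have "\<pi> j \<in> {..n}" by (simp only: permutes_in_image[OF assms(1)])
  then show "\<pi> j \<le> n" by simp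
  show "\<pi> j \<noteq> \<pi> n" using injD[OF permutes_inj[OF assms(1)]] assms(2) by force
qed

lemma phi_comp:
  assumes \<pi>: "\<pi> permutes {..n}" and j: "j < n"
  shows "phi2 n \<pi> (\<pi> n) w (phi1 n \<sigma> (\<pi> n) x) j = w j * dd n \<sigma> \<pi> x j"
proof -
  have rn: "\<pi> n \<le> n" using permutes_in_image[OF \<pi>] by auto
  have key: "phi1 n \<sigma> (\<pi> n) x (kap (\<pi> n) n (\<pi> i)) = lv n \<sigma> \<pi> x i" if "i < n" for i
    using perm_facts[OF \<pi> that] rn
    by (simp add: phi1_val kap_lt kap_kap lv_def)
  have k1: "1 \<le> j \<Longrightarrow> j - 1 < n" and k2: "2 \<le> j \<Longrightarrow> j - 2 < n" using j by auto
  consider "j = 0" | "j = 1" | "2 \<le> j" by linarith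
  then show ?thesis
  proof cases
    case 1 then show ?thesis unfolding phi2_val[OF j] dd_def using key[OF j] by simp
  next
    case 2 then show ?thesis unfolding phi2_val[OF j] dd_def using key[OF j] key[OF k1] by (simp add: algebra_simps)
  next
    case 3 then show ?thesis unfolding phi2_val[OF j] dd_def using key[OF j] key[OF k1] key[OF k2]
      by (simp add: algebra_simps)
  qed
qed

lemma fcone_eq:
  assumes \<pi>: "\<pi> permutes {..n}" and w: "\<And>j. j < n \<Longrightarrow> w j > 0"
  shows "fcone n \<sigma> \<pi> w = {x \<in> space (LL {..<n}). phi2 n \<pi> (\<pi> n) w (phi1 n \<sigma> (\<pi> n) x) \<in> simp_set n}"
proof -
  have sp: "phi2 n \<pi> (\<pi> n) w u \<in> space (LL {..<n})" for u
    by (simp add: phi2_def triT_def space_PiM)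
  have ww: "0 \<le> w j * dd n \<sigma> \<pi> x j \<longleftrightarrow> 0 \<le> dd n \<sigma> \<pi> x j" if "j < n" for j x
    using w[OF that] by (simp add: zero_le_mult_iff)
  have "(\<forall>j<n. 0 \<le> dd n \<sigma> \<pi> x j) \<longleftrightarrow> (\<forall>j<n. 0 \<le> phi2 n \<pi> (\<pi> n) w (phi1 n \<sigma> (\<pi> n) x) j)" for x
    using ww by (simp add: phi_comp[OF \<pi>])
  moreover have "(\<Sum>j<n. w j * dd n \<sigma> \<pi> x j) = sum (phi2 n \<pi> (\<pi> n) w (phi1 n \<sigma> (\<pi> n) x)) {..<n}" for x
    by (intro sum.cong) (simp_all add: phi_comp[OF \<pi>])
  ultimately show ?thesis
    unfolding fcone_def simp_set_def using sp by auto
qed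

lemma rho1_inj:
  fixes r n :: nat
  assumes "r \<le> n"
  shows "inj_on (\<lambda>k. if k < r then k else n - 1 + r - k) {..<n}"
    "(\<lambda>k. if k < r then k else n - 1 + r - k) ` {..<n} \<subseteq> {..<n}"
proof -
  show "inj_on (\<lambda>k. if k < r then k else n - 1 + r - k) {..<n}"
  proof (rule inj_onI)
    fix k k' assume k: "k \<in> {..<n}" and k': "k' \<in> {..<n}"
      and eq: "(if k < r then k else n - 1 + r - k) = (if k' < r then k' else n - 1 + r - k')"
    show "k = k'"
    proof (cases "k < r"; cases "k' < r")
      assume "k < r" "k' < r" then show ?thesis using eq by simp
    next
      assume "k < r" "\<not> k' < r" then show ?thesis using eq k' by simp
    next
      assume "\<not> k < r" "k' < r" then show ?thesis using eq k by simp
    next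
      assume "\<not> k < r" "\<not> k' < r" then show ?thesis using eq k k' by simp
    qed
  qed
  show "(\<lambda>k. if k < r then k else n - 1 + r - k) ` {..<n} \<subseteq> {..<n}"
    by auto
qed

lemma tau2_inj:
  fixes n :: nat
  assumes \<pi>: "\<pi> permutes {..n}"
  shows "inj_on (\<lambda>j. kap (\<pi> n) n (\<pi> j)) {..<n}" "(\<lambda>j. kap (\<pi> n) n (\<pi> j)) ` {..<n} \<subseteq> {..<n}"
proof -
  have rn: "\<pi> n \<le> n" using permutes_in_image[OF \<pi>] by auto
  show "(\<lambda>j. kap (\<pi> n) n (\<pi> j)) ` {..<n} \<subseteq> {..<n}"
  proof (rule image_subsetI)
    fix j assume "j \<in> {..<n}"
    then have j: "j < n" by simp
    show "kap (\<pi> n) n (\<pi> j) \<in> {..<n}"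
      using kap_lt[OF perm_facts(1)[OF \<pi> j] perm_facts(2)[OF \<pi> j] rn] by simp
  qed
  show "inj_on (\<lambda>j. kap (\<pi> n) n (\<pi> j)) {..<n}"
  proof (rule inj_onI)
    fix i j assume i: "i \<in> {..<n}" and j: "j \<in> {..<n}" and eq: "kap (\<pi> n) n (\<pi> i) = kap (\<pi> n) n (\<pi> j)"
    have i': "i < n" and j': "j < n" using i j by auto
    have "\<pi> i = \<pi> j"
      using kap_kap[OF perm_facts(1)[OF \<pi> i'] perm_facts(2)[OF \<pi> i'] rn]
        kap_kap[OF perm_facts(1)[OF \<pi> j'] perm_facts(2)[OF \<pi> j'] rn] eq by metis
    then show "i = j" using injD[OF permutes_inj[OF \<pi>]] by blast
  qed
qed

lemma fcone_vol:
  assumes \<sigma>: "\<sigma> permutes {..<n}" and \<pi>: "\<pi> permutes {..n}" and w: "\<And>j. j < n \<Longrightarrow> w j > 0"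
  shows "emeasure (LL {..<n}) (fcone n \<sigma> \<pi> w) = ennreal (1 / (fact n * (\<Prod>j<n. w j)))"
proof -
  define r where "r = \<pi> n"
  have rn: "r \<le> n" using permutes_in_image[OF \<pi>] by (auto simp: r_def)
  define \<rho> where "\<rho> k = (if k < r then k else n - 1 + r - k)" for k
  have \<sigma>inj: "inj_on \<sigma> {..<n}" using permutes_inj[OF \<sigma>] by (metis inj_on_subset subset_UNIV)
  have \<sigma>im: "\<sigma> ` {..<n} \<subseteq> {..<n}" using permutes_image[OF \<sigma>] by simp
  have t1inj: "inj_on (\<lambda>k. \<sigma> (if k < r then k else n - 1 + r - k)) {..<n}"
    using comp_inj_on[OF rho1_inj(1)[OF rn] inj_on_subset[OF \<sigma>inj rho1_inj(2)[OF rn]]]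
    by (simp add: o_def)
  have t1im: "(\<lambda>k. \<sigma> (if k < r then k else n - 1 + r - k)) ` {..<n} \<subseteq> {..<n}"
    using rho1_inj(2)[OF rn] \<sigma>im by (auto simp: image_subset_iff)
  define F1 where "F1 = phi1 n \<sigma> r"
  define F2 where "F2 = phi2 n \<pi> r w"
  have F1m: "F1 \<in> measurable (LL {..<n}) (LL {..<n})"
    unfolding F1_def phi1_def by (rule triT_meas[OF t1im])
  have F2m: "F2 \<in> measurable (LL {..<n}) (LL {..<n})"
    unfolding F2_def phi2_def r_def by (rule triT_meas[OF tau2_inj(2)[OF \<pi>]])
  have S: "simp_set n \<in> sets (LL {..<n})" by (rule simp_set_sets)
  have ce: "fcone n \<sigma> \<pi> w = (\<lambda>x. F2 (F1 x)) -` simp_set n \<inter> space (LL {..<n})"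
  proof -
    have "fcone n \<sigma> \<pi> w = {x \<in> space (LL {..<n}). phi2 n \<pi> (\<pi> n) w (phi1 n \<sigma> (\<pi> n) x) \<in> simp_set n}"
      by (rule fcone_eq[OF \<pi> w])
    then show ?thesis unfolding F1_def F2_def r_def by blast
  qed
  have gm: "(\<lambda>u. indicator (simp_set n) (F2 u) :: ennreal) \<in> borel_measurable (LL {..<n})"
    using measurable_compose[OF F2m borel_measurable_indicator[OF S]] by simp
  have "emeasure (LL {..<n}) (fcone n \<sigma> \<pi> w) = (\<integral>\<^sup>+x. indicator (simp_set n) (F2 (F1 x)) \<partial>LL {..<n})"
  proof -
    have Fs: "(\<lambda>x. F2 (F1 x)) -` simp_set n \<inter> space (LL {..<n}) \<in> sets (LL {..<n})"
      using measurable_sets[OF measurable_comp[OF F1m F2m] S] by (simp add: o_def)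
    show ?thesis unfolding ce
      by (subst nn_integral_indicator[OF Fs, symmetric]) (auto intro!: nn_integral_cong simp: indicator_def)
  qed
  also have "\<dots> = (\<integral>\<^sup>+u. indicator (simp_set n) (F2 u) \<partial>LL {..<n})"
  proof -
    have "(\<Prod>k<n. ennreal \<bar>if k < r then 1 else -1\<bar>) = 1" by (intro prod.neutral) auto
    then show ?thesis
      using tri_full[OF t1inj t1im _ gm, where a="\<lambda>k. if k < r then 1 else -1" and
          b="\<lambda>k. if k = r then 1 else 0" and e="\<lambda>k j. if j + 1 = k then (if k < r then -1 else if k = r then 0 else 1) else 0"]
      unfolding F1_def phi1_def by simp
  qed
  finally have e1: "emeasure (LL {..<n}) (fcone n \<sigma> \<pi> w) = (\<integral>\<^sup>+u. indicator (simp_set n) (F2 u) \<partial>LL {..<n})" .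
  have pw: "(\<Prod>k<n. ennreal \<bar>w k\<bar>) = ennreal (\<Prod>k<n. w k)"
  proof -
    have "(\<Prod>k<n. ennreal \<bar>w k\<bar>) = (\<Prod>k<n. ennreal (w k))"
      using w by (intro prod.cong) (auto simp: less_imp_le)
    also have "\<dots> = ennreal (\<Prod>k<n. w k)"
      using w by (intro prod_ennreal) (auto intro: less_imp_le)
    finally show ?thesis .
  qed
  have wpos: "(\<Prod>k<n. w k) > 0" using w by (intro prod_pos) auto
  have e2: "(\<integral>\<^sup>+u. indicator (simp_set n) (F2 u) \<partial>LL {..<n}) * ennreal (\<Prod>k<n. w k) = ennreal (1 / fact n)"
    using tri_full[OF tau2_inj[OF \<pi>] _ borel_measurable_indicator[OF S], of w "\<lambda>_. 0"
        "\<lambda>j i. (if i + 1 = j then - w j else 0) + (if i + 2 = j then - w j else 0)"] w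
  proof -
    have wn: "\<And>k. k < n \<Longrightarrow> w k \<noteq> 0" using w by (metis less_irrefl)
    have "(\<integral>\<^sup>+u. indicator (simp_set n) (F2 u) \<partial>LL {..<n}) * (\<Prod>k<n. ennreal \<bar>w k\<bar>)
       = (\<integral>\<^sup>+u. indicator (simp_set n) u \<partial>LL {..<n})"
      using tri_full[OF tau2_inj[OF \<pi>] wn borel_measurable_indicator[OF S], where b="\<lambda>_. 0" and
        e="\<lambda>j i. (if i + 1 = j then - w j else 0) + (if i + 2 = j then - w j else 0)"]
      unfolding F2_def phi2_def r_def by simp
    then show ?thesis unfolding pw using S simp_set_emeasure[of n] by simp
  qed
  define X where "X = (\<integral>\<^sup>+u. indicator (simp_set n) (F2 u) \<partial>LL {..<n})"
  have one: "ennreal (\<Prod>k<n. w k) * ennreal (1 / (\<Prod>k<n. w k)) = 1"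
  proof -
    obtain P where P: "P = (\<Prod>k<n. w k)" "P > 0" using wpos by blast
    have "ennreal P * ennreal (1 / P) = ennreal (P * (1 / P))" using P(2) by (subst ennreal_mult) auto
    also have "\<dots> = 1" using P(2) by simp
    finally show ?thesis unfolding P(1)[symmetric] .
  qed
  have "X = X * (ennreal (\<Prod>k<n. w k) * ennreal (1 / (\<Prod>k<n. w k)))"
    by (simp only: one mult_1_right)
  also have "\<dots> = X * ennreal (\<Prod>k<n. w k) * ennreal (1 / (\<Prod>k<n. w k))"
    by (simp only: mult.assoc)
  also have "\<dots> = ennreal (1 / fact n) * ennreal (1 / (\<Prod>k<n. w k))"
    using e2 by (simp add: X_def)
  also have "\<dots> = ennreal (1 / (fact n * (\<Prod>j<n. w j)))"
    using wpos by (simp add: ennreal_mult[symmetric])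
  finally show ?thesis using e1 X_def by simp
qed


fun fibo :: "nat \<Rightarrow> nat" where
  "fibo 0 = 0" | "fibo (Suc 0) = 1" | "fibo (Suc (Suc n)) = fibo (Suc n) + fibo n"

fun GG :: "nat \<Rightarrow> nat" where
  "GG 0 = 1" | "GG (Suc m) = GG m + fibo (Suc (Suc m))"

definition cw :: "nat \<Rightarrow> nat \<Rightarrow> real" where
  "cw n j = real (GG (n - j))"

lemma GG_pos: "GG m > 0"
  by (induction m) auto

lemma fib_rep:
  fixes l :: "nat \<Rightarrow> real"
  defines "d \<equiv> \<lambda>j. l j - (if 1 \<le> j then l (j - 1) else 0) - (if 2 \<le> j then l (j - 2) else 0)"
  shows "l k = (\<Sum>j\<le>k. real (fibo (Suc k - j)) * d j)"
proof (induction k rule: fibo.induct)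
  case 1
  then show ?case by (simp add: d_def)
next
  case 2
  then show ?case by (simp add: d_def)
next
  case (3 m)
  have s1: "(\<Sum>j\<le>m. real (fibo (Suc (Suc (Suc m)) - j)) * d j)
      = (\<Sum>j\<le>m. real (fibo (Suc (Suc m) - j)) * d j) + (\<Sum>j\<le>m. real (fibo (Suc m - j)) * d j)"
  proof -
    have "(\<Sum>j\<le>m. real (fibo (Suc (Suc (Suc m)) - j)) * d j)
        = (\<Sum>j\<le>m. real (fibo (Suc (Suc m) - j)) * d j + real (fibo (Suc m - j)) * d j)"
    proof (intro sum.cong refl)
      fix j assume "j \<in> {..m}"
      then have "Suc (Suc (Suc m)) - j = Suc (Suc (Suc m - j))" "Suc (Suc m) - j = Suc (Suc m - j)" by auto
      then show "real (fibo (Suc (Suc (Suc m)) - j)) * d j = real (fibo (Suc (Suc m) - j)) * d j + real (fibo (Suc m - j)) * d j"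
        by (simp add: algebra_simps)
    qed
    then show ?thesis by (simp add: sum.distrib)
  qed
  have "(\<Sum>j\<le>Suc (Suc m). real (fibo (Suc (Suc (Suc m)) - j)) * d j)
      = d (Suc (Suc m)) + d (Suc m) + (\<Sum>j\<le>m. real (fibo (Suc (Suc (Suc m)) - j)) * d j)"
    by (simp add: Suc_diff_le)
  also have "\<dots> = d (Suc (Suc m)) + d (Suc m) + (\<Sum>j\<le>m. real (fibo (Suc (Suc m) - j)) * d j) + l m"
    using s1 "3.IH"(2) by simp
  also have "(\<Sum>j\<le>m. real (fibo (Suc (Suc m) - j)) * d j) = l (Suc m) - d (Suc m)"
    using "3.IH"(1) by (simp add: Suc_diff_le)
  finally show ?case by (simp add: d_def)
qed

lemma cw_identity:
  fixes l :: "nat \<Rightarrow> real"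
  defines "d \<equiv> \<lambda>j. l j - (if 1 \<le> j then l (j - 1) else 0) - (if 2 \<le> j then l (j - 2) else 0)"
  shows "(\<Sum>j\<le>n. cw n j * d j) = (\<Sum>k\<le>n. l k)"
proof (induction n)
  case 0
  then show ?case by (simp add: cw_def d_def)
next
  case (Suc n)
  have "(\<Sum>j\<le>Suc n. cw (Suc n) j * d j) = (\<Sum>j\<le>n. cw (Suc n) j * d j) + d (Suc n)"
    by (simp add: cw_def)
  also have "(\<Sum>j\<le>n. cw (Suc n) j * d j) = (\<Sum>j\<le>n. cw n j * d j) + (\<Sum>j\<le>n. real (fibo (Suc (Suc n) - j)) * d j)"
  proof -
    have "(\<Sum>j\<le>n. cw (Suc n) j * d j) = (\<Sum>j\<le>n. cw n j * d j + real (fibo (Suc (Suc n) - j)) * d j)"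
    proof (intro sum.cong refl)
      fix j assume "j \<in> {..n}"
      then have "Suc n - j = Suc (n - j)" "Suc (Suc n) - j = Suc (Suc (n - j))" by auto
      then show "cw (Suc n) j * d j = cw n j * d j + real (fibo (Suc (Suc n) - j)) * d j"
        by (simp add: cw_def algebra_simps)
    qed
    then show ?thesis by (simp add: sum.distrib)
  qed
  also have "(\<Sum>j\<le>n. real (fibo (Suc (Suc n) - j)) * d j) = l (Suc n) - d (Suc n)"
    using fib_rep[of l "Suc n"] unfolding d_def by (simp add: Suc_diff_le)
  finally show ?case using Suc.IH by simp
qed

lemma sorted_perm:
  assumes b: "\<And>i. i < n \<Longrightarrow> \<omega> i \<in> {0..1}"
  obtains \<sigma> where "\<sigma> permutes {..<n}" "sorted (map (\<lambda>i. \<omega> (\<sigma> i)) [0..<n])"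
    "seg_lengths \<omega> n = map (sp n \<sigma> (restrict \<omega> {..<n})) [0..<Suc n]"
proof -
  define xs where "xs = map \<omega> [0..<n]"
  have "mset (sort xs) = mset xs" by simp
  then obtain \<sigma> where \<sigma>: "\<sigma> permutes {..<length xs}" "permute_list \<sigma> xs = sort xs"
    by (rule mset_eq_permutation)
  have len: "length xs = n" by (simp add: xs_def)
  have \<sigma>n: "\<And>i. i < n \<Longrightarrow> \<sigma> i < n"
    using permutes_in_image[OF \<sigma>(1)] len by auto
  have srt: "sort xs = map (\<lambda>i. \<omega> (\<sigma> i)) [0..<n]"
    using \<sigma>(2)[symmetric] \<sigma>n len by (auto simp: permute_list_def xs_def intro!: nth_equalityI)
  have setb: "\<forall>v\<in>set xs. 0 \<le> v \<and> v \<le> 1" using b by (auto simp: xs_def)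
  have s01: "sort (0 # 1 # xs) = 0 # sort xs @ [1]"
  proof (rule properties_for_sort)
    show "mset (0 # sort xs @ [1]) = mset (0 # 1 # xs)" by simp
    show "sorted (0 # sort xs @ [1])"
      using setb by (auto simp: sorted_append)
  qed
  have nth: "(0 # sort xs @ [1]) ! i = (if i = 0 then 0 else if i \<le> n then \<omega> (\<sigma> (i - 1)) else 1)"
    if "i \<le> Suc n" for i
    using that by (auto simp: srt nth_append nth_Cons')
  have nth2: "(sort xs @ [1]) ! i = (if i < n then \<omega> (\<sigma> i) else 1)" if "i \<le> n" for i
    using that by (auto simp: srt nth_append)
  have "seg_lengths \<omega> n = map (sp n \<sigma> (restrict \<omega> {..<n})) [0..<Suc n]"
    unfolding seg_lengths_def Let_def xs_def[symmetric] s01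
    by (intro nth_equalityI) (auto simp: nth nth2 simp del: upt_Suc, auto simp: sp_def \<sigma>n)
  moreover have "sorted (map (\<lambda>i. \<omega> (\<sigma> i)) [0..<n])" using srt[symmetric] by simp
  moreover have "\<sigma> permutes {..<n}" using \<sigma>(1) len by simp
  ultimately show ?thesis using that by blast
qed

lemma tri_of_sorted:
  fixes a b c :: real
  assumes "0 \<le> a" "a \<le> b" "b \<le> c" "c < a + b"
  shows "is_triangle a b c"
  unfolding is_triangle_def using assms by linarith

lemma sp_sum:
  "(\<Sum>i\<le>n. sp n \<sigma> x i) = 1"
proof -
  define z where "z i = (if i = 0 then 0 else if i \<le> n then x (\<sigma> (i - 1)) else 1)" for i
  have "(\<Sum>i\<le>n. sp n \<sigma> x i) = (\<Sum>i<Suc n. z (Suc i) - z i)"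
    unfolding lessThan_Suc_atMost by (intro sum.cong) (auto simp: sp_def z_def)
  also have "\<dots> = z (Suc n) - z 0" by (rule sum_lessThan_telescope)
  finally show ?thesis by (simp add: z_def)
qed

lemma fib_cone:
  assumes \<sigma>: "\<sigma> permutes {..<n}" and srt: "sorted (map (\<lambda>i. \<omega> (\<sigma> i)) [0..<n])"
    and b: "\<And>i. i < n \<Longrightarrow> \<omega> i \<in> {0..1}"
    and x: "x = restrict \<omega> {..<n}"
    and nt: "\<not> has_triangle (map (sp n \<sigma> x) [0..<Suc n])"
  obtains \<pi> where "\<pi> permutes {..n}" "\<And>j k. j \<le> k \<Longrightarrow> k \<le> n \<Longrightarrow> lv n \<sigma> \<pi> x j \<le> lv n \<sigma> \<pi> x k"
    "\<And>j. j \<le> n \<Longrightarrow> 0 \<le> dd n \<sigma> \<pi> x j" "x \<in> fcone n \<sigma> \<pi> (cw n)" "(\<Sum>j\<le>n. lv n \<sigma> \<pi> x j) = 1"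
proof -
  have \<sigma>n: "\<And>i. i < n \<Longrightarrow> \<sigma> i < n"
    using permutes_in_image[OF \<sigma>] by auto
  have xv: "\<And>i. i < n \<Longrightarrow> x (\<sigma> i) = \<omega> (\<sigma> i)" using \<sigma>n x by simp
  have mono: "\<omega> (\<sigma> i) \<le> \<omega> (\<sigma> j)" if "i \<le> j" "j < n" for i j
    using sorted_nth_mono[OF srt, of i j] that by simp
  have spnn: "0 \<le> sp n \<sigma> x i" if i: "i \<le> n" for i
  proof -
    consider "i = 0" "i < n" | "0 < i" "i < n" | "i = n" using i by fastforce
    then show ?thesis
    proof cases
      case 1 then show ?thesis using b[OF \<sigma>n[OF 1(2)]] xv by (simp add: sp_def)
    next
      case 2 then show ?thesis using mono[of "i - 1" i] xv[of i] xv[of "i - 1"] by (simp add: sp_def)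
    next
      case 3 then show ?thesis
        using b[OF \<sigma>n[of "n - 1"]] xv[of "n - 1"] by (cases "n = 0") (auto simp: sp_def)
    qed
  qed
  define ls where "ls = map (sp n \<sigma> x) [0..<Suc n]"
  have len: "length ls = Suc n" by (simp add: ls_def)
  have "mset (sort ls) = mset ls" by simp
  then obtain \<pi> where \<pi>: "\<pi> permutes {..<length ls}" "permute_list \<pi> ls = sort ls"
    by (rule mset_eq_permutation)
  have \<pi>': "\<pi> permutes {..n}" using \<pi>(1) len by (simp add: lessThan_Suc_atMost)
  have \<pi>n: "\<And>j. j \<le> n \<Longrightarrow> \<pi> j \<le> n" using permutes_in_image[OF \<pi>'] by auto
  have lvs: "lv n \<sigma> \<pi> x j = sort ls ! j" if "j \<le> n" for j
  proof -
    have "sort ls ! j = ls ! \<pi> j" using permute_list_nth[OF \<pi>(1), of j] \<pi>(2) len that by simp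
    also have "\<dots> = sp n \<sigma> x (\<pi> j)" using \<pi>n[OF that] by (simp add: ls_def nth_append del: upt_Suc)
    finally show ?thesis by (simp add: lv_def)
  qed
  have lvls: "lv n \<sigma> \<pi> x j = ls ! \<pi> j" if "j \<le> n" for j
    using \<pi>n[OF that] by (simp add: lv_def ls_def nth_append del: upt_Suc)
  have lmono: "lv n \<sigma> \<pi> x j \<le> lv n \<sigma> \<pi> x k" if "j \<le> k" "k \<le> n" for j k
    using sorted_nth_mono[OF sorted_sort[of ls], of j k] that len lvs by simp
  have lnn: "0 \<le> lv n \<sigma> \<pi> x j" if "j \<le> n" for j
    using spnn[OF \<pi>n[OF that]] by (simp add: lv_def)
  have ddnn: "0 \<le> dd n \<sigma> \<pi> x j" if j: "j \<le> n" for j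
  proof -
    consider "j = 0" | "j = 1" | "2 \<le> j" by linarith
    then show ?thesis
    proof cases
      case 1 then show ?thesis using lnn[of 0] by (simp add: dd_def)
    next
      case 2 then show ?thesis using lmono[of 0 1] j by (simp add: dd_def)
    next
      case 3
      show ?thesis
      proof (rule ccontr)
        assume "\<not> 0 \<le> dd n \<sigma> \<pi> x j"
        then have lt: "lv n \<sigma> \<pi> x j < lv n \<sigma> \<pi> x (j - 2) + lv n \<sigma> \<pi> x (j - 1)"
          using 3 by (simp add: dd_def)
        have "is_triangle (lv n \<sigma> \<pi> x (j - 2)) (lv n \<sigma> \<pi> x (j - 1)) (lv n \<sigma> \<pi> x j)"
          using lnn[of "j - 2"] lmono[of "j - 2" "j - 1"] lmono[of "j - 1" j] lt j 3
          by (intro tri_of_sorted) auto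
        then have T: "is_triangle (ls ! \<pi> (j - 2)) (ls ! \<pi> (j - 1)) (ls ! \<pi> j)"
          using lvls[of "j - 2"] lvls[of "j - 1"] lvls[of j] j by simp
        have jj: "j - 2 \<le> n" "j - 1 \<le> n" using j by auto
        have L: "\<pi> (j - 2) < length ls" "\<pi> (j - 1) < length ls" "\<pi> j < length ls"
          using \<pi>n[OF jj(1)] \<pi>n[OF jj(2)] \<pi>n[OF j] len by auto
        have ij: "j - 2 \<noteq> j - 1" "j - 2 \<noteq> j" "j - 1 \<noteq> j" using 3 by auto
        have D: "\<pi> (j - 2) \<noteq> \<pi> (j - 1)" "\<pi> (j - 2) \<noteq> \<pi> j" "\<pi> (j - 1) \<noteq> \<pi> j"
          using injD[OF permutes_inj[OF \<pi>']] ij by blast+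
        have "has_triangle ls"
          unfolding has_triangle_def using T L D by blast
        then show False using nt ls_def by simp
      qed
    qed
  qed
  have lsum: "(\<Sum>j\<le>n. lv n \<sigma> \<pi> x j) = 1"
  proof -
    have "(\<Sum>j\<le>n. lv n \<sigma> \<pi> x j) = (\<Sum>j\<le>n. (sp n \<sigma> x \<circ> \<pi>) j)" by (simp add: lv_def)
    also have "\<dots> = (\<Sum>i\<le>n. sp n \<sigma> x i)" by (rule sum.permute[OF \<pi>', symmetric])
    also have "\<dots> = 1" by (rule sp_sum)
    finally show ?thesis .
  qed
  have ident: "(\<Sum>j\<le>n. cw n j * dd n \<sigma> \<pi> x j) = 1"
  proof -
    have "dd n \<sigma> \<pi> x = (\<lambda>j. lv n \<sigma> \<pi> x j - (if 1 \<le> j then lv n \<sigma> \<pi> x (j - 1) else 0)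
        - (if 2 \<le> j then lv n \<sigma> \<pi> x (j - 2) else 0))" by (simp add: dd_def fun_eq_iff)
    then show ?thesis using cw_identity[of n "lv n \<sigma> \<pi> x"] lsum by simp
  qed
  have "(\<Sum>j<n. cw n j * dd n \<sigma> \<pi> x j) \<le> 1"
  proof -
    have "(\<Sum>j\<le>n. cw n j * dd n \<sigma> \<pi> x j) = (\<Sum>j<n. cw n j * dd n \<sigma> \<pi> x j) + cw n n * dd n \<sigma> \<pi> x n"
      by (simp add: lessThan_Suc_atMost[symmetric])
    moreover have "cw n n = 1" by (simp add: cw_def)
    ultimately show ?thesis using ident ddnn[of n] by simp
  qed
  moreover have "x \<in> space (LL {..<n})" using x by (simp add: space_PiM)
  ultimately have "x \<in> fcone n \<sigma> \<pi> (cw n)" using ddnn by (simp add: fcone_def)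
  then show ?thesis using that \<pi>' lmono ddnn lsum by blast
qed


abbreviation UU :: "real measure" where "UU \<equiv> uniform_measure lborel {0..1::real}"

lemma UU_prob: "prob_space UU"
  by (intro prob_space_uniform_measure) auto

lemma emeasure_UU: "A \<in> sets borel \<Longrightarrow> emeasure UU A = emeasure lborel ({0..1} \<inter> A)"
  by (simp add: divide_ennreal_def)

lemma PiM_UU_density:
  assumes fin: "finite I"
  shows "PiM I (\<lambda>_. UU) = density (LL I) (indicator (PiE I (\<lambda>_. {0..1})))"
proof -
  interpret U: prob_space UU by (rule UU_prob)
  interpret product_sigma_finite "\<lambda>_::nat. UU"
    using U.sigma_finite_measure by (simp add: product_sigma_finite_def)
  interpret L: product_sigma_finite "\<lambda>_::nat. lborel::real measure" by standard
  show ?thesis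
  proof (rule PiM_eqI[symmetric, OF fin])
    show "sets (density (LL I) (indicator (PiE I (\<lambda>_. {0..1})))) = sets (PiM I (\<lambda>_. UU))"
      unfolding sets_density by (rule sets_PiM_cong) simp_all
    fix A assume A: "\<And>i. i \<in> I \<Longrightarrow> A i \<in> sets UU"
    have C: "PiE I (\<lambda>_. {0..1::real}) \<in> sets (LL I)" using fin by (intro sets_PiM_I_finite) auto
    have PA: "PiE I A \<in> sets (LL I)" using fin A by (intro sets_PiM_I_finite) auto
    have "emeasure (density (LL I) (indicator (PiE I (\<lambda>_. {0..1})))) (PiE I A)
        = (\<integral>\<^sup>+x. indicator (PiE I (\<lambda>_. {0..1})) x * indicator (PiE I A) x \<partial>LL I)"
      by (rule emeasure_density[OF borel_measurable_indicator[OF C] PA])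
    also have "\<dots> = (\<integral>\<^sup>+x. indicator (PiE I (\<lambda>i. {0..1} \<inter> A i)) x \<partial>LL I)"
      by (intro nn_integral_cong) (simp only: indicator_inter_arith[symmetric] PiE_Int)
    also have "\<dots> = emeasure (LL I) (PiE I (\<lambda>i. {0..1} \<inter> A i))"
      using fin A by (intro nn_integral_indicator sets_PiM_I_finite) auto
    also have "\<dots> = (\<Prod>i\<in>I. emeasure lborel ({0..1} \<inter> A i))"
      using fin A by (intro L.emeasure_PiM) auto
    also have "\<dots> = (\<Prod>i\<in>I. emeasure UU (A i))"
      using A by (intro prod.cong) (auto simp: divide_ennreal_def)
    finally show "emeasure (density (LL I) (indicator (PiE I (\<lambda>_. {0..1})))) (PiE I A) = (\<Prod>i\<in>I. emeasure UU (A i))" .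
  qed
qed

lemma PiM_UU_le:
  assumes fin: "finite I" and S: "S \<in> sets (LL I)"
  shows "emeasure (PiM I (\<lambda>_. UU)) S \<le> emeasure (LL I) S"
proof -
  have "emeasure (PiM I (\<lambda>_. UU)) S = (\<integral>\<^sup>+x. indicator (PiE I (\<lambda>_. {0..1})) x * indicator S x \<partial>LL I)"
  proof -
    have C: "PiE I (\<lambda>_. {0..1::real}) \<in> sets (LL I)" using fin by (intro sets_PiM_I_finite) auto
    show ?thesis unfolding PiM_UU_density[OF fin]
      by (rule emeasure_density[OF borel_measurable_indicator[OF C] S])
  qed
  also have "\<dots> \<le> (\<integral>\<^sup>+x. indicator S x \<partial>LL I)"
    by (intro nn_integral_mono) (auto simp: indicator_def)
  also have "\<dots> = emeasure (LL I) S" using S by simp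
  finally show ?thesis .
qed

lemma break_restrict:
  assumes S: "S \<in> sets (LL {..<n})"
  shows "emeasure break_space {\<omega> \<in> space break_space. restrict \<omega> {..<n} \<in> S} \<le> emeasure (LL {..<n}) S"
proof -
  have P: "\<And>i. i \<in> UNIV \<Longrightarrow> prob_space UU" using UU_prob by simp
  have d: "distr break_space (PiM {..<n} (\<lambda>_. UU)) (\<lambda>\<omega>. \<lambda>i\<in>{..<n}. \<omega> (id i)) = PiM {..<n} (\<lambda>_. UU)"
    unfolding break_space_def using distr_PiM_reindex[OF P, where f=id and I="{..<n}"] by simp
  have "sets (PiM {..<n} (\<lambda>_. UU)) = sets (LL {..<n})" by (rule sets_PiM_cong) simp_all
  then have S': "S \<in> sets (PiM {..<n} (\<lambda>_. UU))" using S by simp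
  have m: "(\<lambda>\<omega>. \<lambda>i\<in>{..<n}. \<omega> (id i)) \<in> measurable break_space (PiM {..<n} (\<lambda>_. UU))"
    unfolding break_space_def by (simp add: measurable_restrict_subset)
  have "emeasure break_space {\<omega> \<in> space break_space. restrict \<omega> {..<n} \<in> S}
      = emeasure (distr break_space (PiM {..<n} (\<lambda>_. UU)) (\<lambda>\<omega>. \<lambda>i\<in>{..<n}. \<omega> (id i))) S"
  proof -
    have "(\<lambda>\<omega>. \<lambda>i\<in>{..<n}. \<omega> (id i)) -` S \<inter> space break_space = {\<omega> \<in> space break_space. restrict \<omega> {..<n} \<in> S}"
      by (simp add: set_eq_iff conj_commute)
    then show ?thesis using emeasure_distr[OF m S'] by simp
  qed
  also have "\<dots> = emeasure (PiM {..<n} (\<lambda>_. UU)) S" using d by simp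
  also have "\<dots> \<le> emeasure (LL {..<n}) S" by (rule PiM_UU_le[OF _ S]) simp
  finally show ?thesis .
qed

lemma AE_cube: "AE \<omega> in break_space. \<forall>i. \<omega> i \<in> {0..1}"
proof -
  interpret product_prob_space "\<lambda>_::nat. UU" UNIV
    by (rule product_prob_spaceI) (rule UU_prob)
  have "AE \<omega> in break_space. \<omega> i \<in> {0..1}" for i
  proof -
    have eq: "distr break_space UU (\<lambda>\<omega>. \<omega> i) = UU"
      unfolding break_space_def by (rule PiM_component) simp
    have "AE x in distr break_space UU (\<lambda>\<omega>. \<omega> i). x \<in> {0..1}"
      unfolding eq by (rule AE_uniform_measureI) auto
    then show ?thesis
      by (rule AE_distrD[rotated]) (simp add: break_space_def)
  qed
  then show ?thesis by (simp add: AE_all_countable)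
qed


definition PP :: "nat \<Rightarrow> (nat \<Rightarrow> nat) set" where "PP n = {\<sigma>. \<sigma> permutes {..<n}}"
definition QQ :: "nat \<Rightarrow> (nat \<Rightarrow> nat) set" where "QQ n = {\<pi>. \<pi> permutes {..n}}"

lemma PP_fin: "finite (PP n)" unfolding PP_def by (rule finite_permutations) simp
lemma QQ_fin: "finite (QQ n)" unfolding QQ_def by (rule finite_permutations) simp
lemma PP_card: "card (PP n) = fact n" unfolding PP_def by (rule card_permutations) simp_all
lemma QQ_card: "card (QQ n) = fact (Suc n)" unfolding QQ_def by (rule card_permutations) simp_all

lemma QQ_fiber:
  assumes r: "r \<le> n"
  shows "{\<pi> \<in> QQ n. \<pi> n = r} = (\<lambda>p. Transposition.transpose n r \<circ> p) ` PP n"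
proof
  show "(\<lambda>p. Transposition.transpose n r \<circ> p) ` PP n \<subseteq> {\<pi> \<in> QQ n. \<pi> n = r}"
  proof (rule image_subsetI)
    fix p assume p: "p \<in> PP n"
    then have p1: "p permutes {..<n}" by (simp add: PP_def)
    have p2: "p permutes {..n}" by (rule permutes_subset[OF p1]) auto
    have pn: "p n = n" by (rule permutes_not_in[OF p1]) simp
    have "Transposition.transpose n r \<circ> p permutes {..n}"
      by (rule permutes_compose[OF p2 permutes_swap_id]) (use r in auto)
    then show "Transposition.transpose n r \<circ> p \<in> {\<pi> \<in> QQ n. \<pi> n = r}"
      using pn by (simp add: QQ_def)
  qed
  show "{\<pi> \<in> QQ n. \<pi> n = r} \<subseteq> (\<lambda>p. Transposition.transpose n r \<circ> p) ` PP n"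
  proof
    fix \<pi> assume "\<pi> \<in> {\<pi> \<in> QQ n. \<pi> n = r}"
    then have \<pi>: "\<pi> permutes insert n {..<n}" "\<pi> n = r" by (auto simp: QQ_def lessThan_Suc_atMost[symmetric] lessThan_Suc)
    have "Transposition.transpose n r \<circ> \<pi> \<in> PP n" using permutes_insert_lemma[OF \<pi>(1)] \<pi>(2) by (simp add: PP_def)
    moreover have "\<pi> = Transposition.transpose n r \<circ> (Transposition.transpose n r \<circ> \<pi>)" by (simp add: o_assoc[symmetric] fun_eq_iff)
    ultimately show "\<pi> \<in> (\<lambda>p. Transposition.transpose n r \<circ> p) ` PP n" by blast
  qed
qed

lemma QQ_fiber_card:
  assumes r: "r \<le> n"
  shows "card {\<pi> \<in> QQ n. \<pi> n = r} = fact n"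
proof -
  have "inj_on (\<lambda>p. Transposition.transpose n r \<circ> p) (PP n)"
  proof (rule inj_onI)
    fix p q assume "Transposition.transpose n r \<circ> p = Transposition.transpose n r \<circ> q"
    then have "\<forall>x. Transposition.transpose n r (p x) = Transposition.transpose n r (q x)"
      by (simp add: fun_eq_iff)
    then have "\<forall>x. p x = q x" by (metis transpose_involutory)
    then show "p = q" by auto
  qed
  then show ?thesis unfolding QQ_fiber[OF r] by (simp add: card_image PP_card)
qed

lemma sum_QQ_last:
  fixes g :: "nat \<Rightarrow> real"
  shows "(\<Sum>\<pi>\<in>QQ n. g (\<pi> n)) = fact n * (\<Sum>r\<le>n. g r)"
proof -
  have im: "(\<lambda>\<pi>. \<pi> n) ` QQ n \<subseteq> {..n}"
  proof (rule image_subsetI)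
    fix \<pi> assume "\<pi> \<in> QQ n"
    then have p: "\<pi> permutes {..n}" by (simp add: QQ_def)
    have "n \<in> {..n}" by simp
    then show "\<pi> n \<in> {..n}" by (simp only: permutes_in_image[OF p])
  qed
  have "(\<Sum>\<pi>\<in>QQ n. g (\<pi> n)) = (\<Sum>r\<le>n. \<Sum>\<pi>\<in>{\<pi> \<in> QQ n. \<pi> n = r}. g (\<pi> n))"
    by (rule sum.group[symmetric, OF QQ_fin _ im]) simp
  also have "\<dots> = (\<Sum>r\<le>n. fact n * g r)"
  proof (rule sum.cong[OF refl])
    fix r assume "r \<in> {..n}"
    then have r: "r \<le> n" by simp
    have "(\<Sum>\<pi>\<in>{\<pi> \<in> QQ n. \<pi> n = r}. g (\<pi> n)) = (\<Sum>\<pi>\<in>{\<pi> \<in> QQ n. \<pi> n = r}. g r)"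
      by (rule sum.cong) auto
    also have "\<dots> = fact n * g r" using QQ_fiber_card[OF r] by simp
    finally show "(\<Sum>\<pi>\<in>{\<pi> \<in> QQ n. \<pi> n = r}. g (\<pi> n)) = fact n * g r" .
  qed
  also have "\<dots> = fact n * (\<Sum>r\<le>n. g r)" by (simp add: sum_distrib_left)
  finally show ?thesis .
qed


lemma phi1_meas:
  assumes \<sigma>: "\<sigma> permutes {..<n}" and rn: "r \<le> n"
  shows "phi1 n \<sigma> r \<in> measurable (LL {..<n}) (LL {..<n})"
  unfolding phi1_def
proof (rule triT_meas)
  have \<sigma>im: "\<sigma> ` {..<n} \<subseteq> {..<n}" using permutes_image[OF \<sigma>] by simp
  show "(\<lambda>k. \<sigma> (if k < r then k else n - 1 + r - k)) ` {..<n} \<subseteq> {..<n}"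
  proof (rule image_subsetI)
    fix k assume k: "k \<in> {..<n}"
    have "(if k < r then k else n - 1 + r - k) \<in> {..<n}" using rho1_inj(2)[OF rn] k by blast
    then show "\<sigma> (if k < r then k else n - 1 + r - k) \<in> {..<n}" using \<sigma>im by blast
  qed
qed

lemma phi2_meas:
  assumes \<pi>: "\<pi> permutes {..n}"
  shows "phi2 n \<pi> (\<pi> n) w \<in> measurable (LL {..<n}) (LL {..<n})"
  unfolding phi2_def by (rule triT_meas[OF tau2_inj(2)[OF \<pi>]])

lemma fcone_sets:
  assumes \<sigma>: "\<sigma> permutes {..<n}" and \<pi>: "\<pi> permutes {..n}" and w: "\<And>j. j < n \<Longrightarrow> w j > 0"
  shows "fcone n \<sigma> \<pi> w \<in> sets (LL {..<n})"
proof -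
  have "n \<in> {..n}" by simp
  then have "\<pi> n \<in> {..n}" by (simp only: permutes_in_image[OF \<pi>])
  then have rn: "\<pi> n \<le> n" by simp
  have m: "(\<lambda>x. phi2 n \<pi> (\<pi> n) w (phi1 n \<sigma> (\<pi> n) x)) \<in> measurable (LL {..<n}) (LL {..<n})"
    using measurable_comp[OF phi1_meas[OF \<sigma> rn] phi2_meas[OF \<pi>]] by (simp add: o_def)
  have "fcone n \<sigma> \<pi> w = (\<lambda>x. phi2 n \<pi> (\<pi> n) w (phi1 n \<sigma> (\<pi> n) x)) -` simp_set n \<inter> space (LL {..<n})"
  proof -
    have "fcone n \<sigma> \<pi> w = {x \<in> space (LL {..<n}). phi2 n \<pi> (\<pi> n) w (phi1 n \<sigma> (\<pi> n) x) \<in> simp_set n}"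
      by (rule fcone_eq[OF \<pi> w])
    then show ?thesis by blast
  qed
  also have "\<dots> \<in> sets (LL {..<n})" by (rule measurable_sets[OF m simp_set_sets])
  finally show ?thesis .
qed

definition good :: "(nat \<Rightarrow> nat) \<Rightarrow> (nat \<Rightarrow> nat) \<Rightarrow> bool" where
  "good \<sigma> \<pi> \<longleftrightarrow> (\<pi> 3 < 3 \<and> \<sigma> (\<pi> 3) = 2) \<or> (0 < \<pi> 3 \<and> \<sigma> (\<pi> 3 - 1) = 2)"

definition w3 :: "(nat \<Rightarrow> nat) \<Rightarrow> (nat \<Rightarrow> nat) \<Rightarrow> nat \<Rightarrow> real" where
  "w3 \<sigma> \<pi> j = (if j = 0 \<and> \<not> good \<sigma> \<pi> then 8 else cw 3 j)"

definition KK :: "nat \<Rightarrow> (nat \<Rightarrow> real) set" where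
  "KK n = (if n = 3 then (\<Union>p\<in>PP 3 \<times> QQ 3. fcone 3 (fst p) (snd p) (w3 (fst p) (snd p)))
           else (\<Union>p\<in>PP n \<times> QQ n. fcone n (fst p) (snd p) (cw n)))"

lemma cw_pos: "cw n j > 0" by (simp add: cw_def GG_pos)
lemma w3_pos: "w3 \<sigma> \<pi> j > 0" by (simp add: w3_def cw_pos)

lemma PQ_mem: "p \<in> PP n \<times> QQ n \<Longrightarrow> fst p permutes {..<n} \<and> snd p permutes {..n}"
  by (simp add: PP_def QQ_def mem_Times_iff)

lemma UN_fcone_sets:
  assumes W: "\<And>p j. W p j > 0"
  shows "(\<Union>p\<in>PP n \<times> QQ n. fcone n (fst p) (snd p) (W p)) \<in> sets (LL {..<n})"
proof (rule sets.finite_UN)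
  show "finite (PP n \<times> QQ n)" by (simp add: PP_fin QQ_fin)
  fix p assume "p \<in> PP n \<times> QQ n"
  then have p: "fst p permutes {..<n}" "snd p permutes {..n}" using PQ_mem by blast+
  show "fcone n (fst p) (snd p) (W p) \<in> sets (LL {..<n})"
    by (rule fcone_sets[OF p W])
qed

lemma KK_sets: "KK n \<in> sets (LL {..<n})"
  unfolding KK_def
  using UN_fcone_sets[of "\<lambda>p. w3 (fst p) (snd p)" 3] UN_fcone_sets[of "\<lambda>p. cw n" n]
  by (simp add: w3_pos cw_pos)

lemma cw_prod: "(\<Prod>j<n. cw n j) > 0" by (intro prod_pos) (simp add: cw_pos)

lemma UN_fcone_bound:
  assumes W: "\<And>p j. W p j > 0"
  shows "emeasure (LL {..<n}) (\<Union>p\<in>PP n \<times> QQ n. fcone n (fst p) (snd p) (W p))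
    \<le> (\<Sum>p\<in>PP n \<times> QQ n. ennreal (1 / (fact n * (\<Prod>j<n. W p j))))"
proof -
  have "emeasure (LL {..<n}) (\<Union>p\<in>PP n \<times> QQ n. fcone n (fst p) (snd p) (W p))
      \<le> (\<Sum>p\<in>PP n \<times> QQ n. emeasure (LL {..<n}) (fcone n (fst p) (snd p) (W p)))"
  proof (rule emeasure_subadditive_finite)
    show "finite (PP n \<times> QQ n)" by (simp add: PP_fin QQ_fin)
    show "(\<lambda>p. fcone n (fst p) (snd p) (W p)) ` (PP n \<times> QQ n) \<subseteq> sets (LL {..<n})"
    proof (rule image_subsetI)
      fix p assume "p \<in> PP n \<times> QQ n"
      then have p: "fst p permutes {..<n}" "snd p permutes {..n}" using PQ_mem by blast+
      show "fcone n (fst p) (snd p) (W p) \<in> sets (LL {..<n})" by (rule fcone_sets[OF p W])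
    qed
  qed
  also have "\<dots> = (\<Sum>p\<in>PP n \<times> QQ n. ennreal (1 / (fact n * (\<Prod>j<n. W p j))))"
  proof (rule sum.cong[OF refl])
    fix p assume "p \<in> PP n \<times> QQ n"
    then have p: "fst p permutes {..<n}" "snd p permutes {..n}" using PQ_mem by blast+
    show "emeasure (LL {..<n}) (fcone n (fst p) (snd p) (W p)) = ennreal (1 / (fact n * (\<Prod>j<n. W p j)))"
      by (rule fcone_vol[OF p W])
  qed
  finally show ?thesis .
qed

lemma KK_bound:
  assumes "n \<noteq> 3"
  shows "emeasure (LL {..<n}) (KK n) \<le> ennreal (fact (Suc n) / (\<Prod>j<n. cw n j))"
proof -
  let ?c = "1 / (fact n * (\<Prod>j<n. cw n j)) :: real"
  have "emeasure (LL {..<n}) (KK n) \<le> (\<Sum>p\<in>PP n \<times> QQ n. ennreal ?c)"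
    unfolding KK_def using assms UN_fcone_bound[of "\<lambda>p. cw n" n] by (simp add: cw_pos)
  also have "\<dots> = of_nat (fact n * fact (Suc n)) * ennreal ?c"
    by (simp add: PP_card QQ_card card_cartesian_product)
  also have "\<dots> = ennreal (real (fact n * fact (Suc n)) * ?c)"
  proof -
    have gen: "\<And>(k::nat) c. c \<ge> 0 \<Longrightarrow> of_nat k * ennreal c = ennreal (real k * c)"
      by (simp add: ennreal_mult ennreal_of_nat_eq_real_of_nat)
    show ?thesis by (rule gen) (use cw_prod[of n] in simp)
  qed
  also have "real (fact n * fact (Suc n)) * ?c = fact (Suc n) / (\<Prod>j<n. cw n j)"
  proof -
    have gen: "\<And>A X P::real. A \<noteq> 0 \<Longrightarrow> A * X * (1 / (A * P)) = X / P"
      by simp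
    have "real (fact n * fact (Suc n)) = fact n * fact (Suc n)" by (simp only: of_nat_mult of_nat_fact)
    then show ?thesis using gen[of "fact n" "fact (Suc n)" "\<Prod>j<n. cw n j"] by simp
  qed
  finally show ?thesis by simp
qed


lemma GG_vals: "GG 1 = 2" "GG 2 = 4" "GG 3 = 7"
  by (simp_all add: numeral_eq_Suc)

lemma w3_prod: "(\<Prod>j<3. w3 \<sigma> \<pi> j) = (if good \<sigma> \<pi> then 56 else 64)"
  by (simp add: w3_def cw_def numeral_eq_Suc lessThan_Suc GG_vals[simplified numeral_eq_Suc])

lemma sigma3:
  fixes \<sigma> :: "nat \<Rightarrow> nat"
  assumes "\<sigma> permutes {..<3}"
  shows "(\<sigma> 0 = 2 \<and> \<sigma> 1 \<noteq> 2 \<and> \<sigma> 2 \<noteq> 2) \<or> (\<sigma> 0 \<noteq> 2 \<and> \<sigma> 1 = 2 \<and> \<sigma> 2 \<noteq> 2) \<or> (\<sigma> 0 \<noteq> 2 \<and> \<sigma> 1 \<noteq> 2 \<and> \<sigma> 2 = 2)"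
proof -
  have e: "\<sigma> ` {..<3} = {..<3}" by (rule permutes_image[OF assms])
  have "(2::nat) \<in> {..<3}" by simp
  then have "(2::nat) \<in> \<sigma> ` {..<3}" by (simp only: e)
  then obtain q where q1: "q \<in> {..<3}" and q2: "2 = \<sigma> q" by (rule imageE)
  have q: "q < 3" "\<sigma> q = 2" using q1 q2 by simp_all
  have inj: "\<And>a. a \<noteq> q \<Longrightarrow> \<sigma> a \<noteq> 2"
    using injD[OF permutes_inj[OF assms]] q(2) by metis
  have "q = 0 \<or> q = 1 \<or> q = 2" using q(1) by linarith
  then show ?thesis
  proof (elim disjE)
    assume "q = 0" then show ?thesis using q(2) inj[of 1] inj[of 2] by simp
  next
    assume "q = 1" then show ?thesis using q(2) inj[of 0] inj[of 2] by simp
  next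
    assume "q = 2" then show ?thesis using q(2) inj[of 0] inj[of 1] by simp
  qed
qed

lemma sum_r3:
  fixes \<sigma> :: "nat \<Rightarrow> nat"
  assumes "\<sigma> permutes {..<3}"
  shows "(\<Sum>r\<le>3. (if (r < 3 \<and> \<sigma> r = 2) \<or> (0 < r \<and> \<sigma> (r - 1) = 2) then 1 / 336 else 1 / 384 :: real))
     = 2 / 336 + 2 / 384"
proof -
  have A: "{..3::nat} = {0,1,2,3}" by auto
  show ?thesis unfolding A using sigma3[OF assms] by auto
qed

lemma KK3_bound: "emeasure (LL {..<3}) (KK 3) \<le> ennreal (45 / 112)"
proof -
  let ?h = "\<lambda>p. 1 / (fact 3 * (\<Prod>j<3. w3 (fst p) (snd p) j)) :: real"
  have "emeasure (LL {..<3}) (KK 3) \<le> (\<Sum>p\<in>PP 3 \<times> QQ 3. ennreal (?h p))"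
    unfolding KK_def using UN_fcone_bound[of "\<lambda>p. w3 (fst p) (snd p)" 3] by (simp add: w3_pos)
  also have "\<dots> = ennreal (\<Sum>p\<in>PP 3 \<times> QQ 3. ?h p)"
    by (rule sum_ennreal) (simp add: w3_prod)
  also have "(\<Sum>p\<in>PP 3 \<times> QQ 3. ?h p) = (\<Sum>\<sigma>\<in>PP 3. \<Sum>\<pi>\<in>QQ 3. ?h (\<sigma>, \<pi>))"
    unfolding sum.cartesian_product by (simp add: case_prod_beta)
  also have "\<dots> = (\<Sum>\<sigma>\<in>PP 3. 6 * (2 / 336 + 2 / 384))"
  proof (rule sum.cong[OF refl])
    fix \<sigma> assume "\<sigma> \<in> PP 3"
    then have \<sigma>: "\<sigma> permutes {..<3}" by (simp add: PP_def)
    define g where "g r = (if (r < 3 \<and> \<sigma> r = 2) \<or> (0 < r \<and> \<sigma> (r - 1) = 2) then 1 / 336 else 1 / 384 :: real)" for r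
    have "(\<Sum>\<pi>\<in>QQ 3. ?h (\<sigma>, \<pi>)) = (\<Sum>\<pi>\<in>QQ 3. g (\<pi> 3))"
      by (intro sum.cong refl) (simp add: w3_prod good_def g_def fact_numeral)
    also have "\<dots> = fact 3 * (\<Sum>r\<le>3. g r)" by (rule sum_QQ_last)
    also have "\<dots> = 6 * (2 / 336 + 2 / 384)" using sum_r3[OF \<sigma>] by (simp add: g_def fact_numeral)
    finally show "(\<Sum>\<pi>\<in>QQ 3. ?h (\<sigma>, \<pi>)) = 6 * (2 / 336 + 2 / 384)" .
  qed
  also have "\<dots> = 45 / 112" by (simp add: PP_card fact_numeral)
  finally show ?thesis by simp
qed


lemma seg2:
  fixes \<omega> :: "nat \<Rightarrow> real"
  assumes "\<omega> 0 \<in> {0..1}" "\<omega> 1 \<in> {0..1}"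
  shows "seg_lengths \<omega> 2 = [min (\<omega> 0) (\<omega> 1), max (\<omega> 0) (\<omega> 1) - min (\<omega> 0) (\<omega> 1), 1 - max (\<omega> 0) (\<omega> 1)]"
proof -
  have u: "[0..<2] = [0, 1::nat]" by (simp add: upt_rec)
  have s: "sort (0 # 1 # map \<omega> [0..<2]) = [0, min (\<omega> 0) (\<omega> 1), max (\<omega> 0) (\<omega> 1), 1]"
  proof (rule properties_for_sort)
    show "mset [0, min (\<omega> 0) (\<omega> 1), max (\<omega> 0) (\<omega> 1), 1] = mset (0 # 1 # map \<omega> [0..<2])"
      unfolding u by (cases "\<omega> 0 \<le> \<omega> 1") (auto simp: min_def max_def)
    show "sorted [0, min (\<omega> 0) (\<omega> 1), max (\<omega> 0) (\<omega> 1), 1::real]"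
      using assms by auto
  qed
  have u3: "[0..<Suc 2] = [0, 1, 2::nat]" by (simp add: upt_rec)
  show ?thesis unfolding seg_lengths_def Let_def s u3 by simp
qed

lemma half_of_notri:
  fixes a b c :: real
  assumes "\<not> has_triangle [a, b, c]" "a + b + c = 1"
  shows "a \<ge> 1/2 \<or> b \<ge> 1/2 \<or> c \<ge> 1/2"
proof -
  have "\<not> is_triangle a b c"
    using assms(1) unfolding has_triangle_def
    by (metis (no_types) length_Cons list.size(3) nth_Cons_0 nth_Cons_Suc numeral_2_eq_2 One_nat_def
        lessI less_Suc_eq zero_neq_one Suc_neq_Zero n_not_Suc_n)
  then show ?thesis using assms(2) unfolding is_triangle_def by linarith
qed

lemma three_cases: "(a::nat) < 3 \<Longrightarrow> a = 0 \<or> a = 1 \<or> a = 2" by linarith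

lemma pair_le:
  fixes l :: "nat \<Rightarrow> real"
  assumes "l 0 \<le> l 1" "l 1 \<le> l 2" "a < 3" "b < 3" "a \<noteq> b"
  shows "l a + l b \<le> l 1 + l 2"
proof -
  have A: "a = 0 \<or> a = 1 \<or> a = 2" and B: "b = 0 \<or> b = 1 \<or> b = 2"
    using assms(3,4) three_cases by blast+
  from A B assms(1,2,5) show ?thesis by (elim disjE) simp_all
qed

lemma n3_half:
  fixes \<sigma> \<pi> :: "nat \<Rightarrow> nat" and \<omega> :: "nat \<Rightarrow> real"
  assumes \<sigma>: "\<sigma> permutes {..<3}" and \<pi>: "\<pi> permutes {..3}"
    and srt: "sorted (map (\<lambda>i. \<omega> (\<sigma> i)) [0..<3])"
    and b: "\<And>i. i < 3 \<Longrightarrow> \<omega> i \<in> {0..1}"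
    and x: "x = restrict \<omega> {..<3}"
    and mono: "\<And>j k. j \<le> k \<Longrightarrow> k \<le> 3 \<Longrightarrow> lv 3 \<sigma> \<pi> x j \<le> lv 3 \<sigma> \<pi> x k"
    and d3: "0 \<le> dd 3 \<sigma> \<pi> x 3"
    and nt2: "\<not> has_triangle (seg_lengths \<omega> 2)"
    and ng: "\<not> good \<sigma> \<pi>"
  shows "lv 3 \<sigma> \<pi> x 3 \<ge> 1/2"
proof -
  let ?l = "lv 3 \<sigma> \<pi> x"
  let ?s = "sp 3 \<sigma> x"
  have \<sigma>3: "\<And>i. i < 3 \<Longrightarrow> \<sigma> i < 3"
  proof -
    fix i :: nat assume "i < 3"
    then have "i \<in> {..<3}" by simp
    then have "\<sigma> i \<in> {..<3}" by (simp only: permutes_in_image[OF \<sigma>])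
    then show "\<sigma> i < 3" by simp
  qed
  have xs: "\<And>i. i < 3 \<Longrightarrow> x (\<sigma> i) = \<omega> (\<sigma> i)" using \<sigma>3 x by simp
  have s0: "?s 0 = \<omega> (\<sigma> 0)" using xs[of 0] by (simp add: sp_def)
  have s1: "?s 1 = \<omega> (\<sigma> 1) - \<omega> (\<sigma> 0)" using xs[of 0] xs[of 1] by (simp add: sp_def)
  have s2: "?s 2 = \<omega> (\<sigma> 2) - \<omega> (\<sigma> 1)" using xs[of 2] xs[of 1] by (simp add: sp_def)
  have s3: "?s 3 = 1 - \<omega> (\<sigma> 2)" using xs[of 2] by (simp add: sp_def)
  have y01: "\<omega> (\<sigma> 0) \<le> \<omega> (\<sigma> 1)" and y12: "\<omega> (\<sigma> 1) \<le> \<omega> (\<sigma> 2)"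
    using srt by (simp_all add: upt_rec numeral_eq_Suc)
  have "seg_lengths \<omega> 2 = [min (\<omega> 0) (\<omega> 1), max (\<omega> 0) (\<omega> 1) - min (\<omega> 0) (\<omega> 1), 1 - max (\<omega> 0) (\<omega> 1)]"
    using b[of 0] b[of 1] by (intro seg2) simp_all
  then have half: "min (\<omega> 0) (\<omega> 1) \<ge> 1/2 \<or> max (\<omega> 0) (\<omega> 1) - min (\<omega> 0) (\<omega> 1) \<ge> 1/2 \<or> 1 - max (\<omega> 0) (\<omega> 1) \<ge> 1/2"
    using nt2 by (intro half_of_notri) simp_all
  have inv: "\<exists>a\<le>3. \<pi> a = i" if "i \<le> 3" for i
  proof -
    have "i \<in> \<pi> ` {..3}" using that permutes_image[OF \<pi>] by simp
    then show ?thesis by auto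
  qed
  have l3: "?l 3 = ?s (\<pi> 3)" by (simp add: lv_def)
  have H1: "?s i \<le> ?l 3" if ii: "i \<le> 3" for i
  proof -
    obtain a where a: "a \<le> 3" "\<pi> a = i" using inv[OF ii] by blast
    then have "?s i = ?l a" by (simp add: lv_def)
    then show ?thesis using mono[OF a(1) order_refl] by simp
  qed
  have l12: "?l 1 + ?l 2 \<le> ?l 3" using d3 by (simp add: dd_def)
  have H2: "?s i + ?s i' \<le> ?l 3" if ii: "i \<le> 3" "i' \<le> 3" "i \<noteq> i'" "i \<noteq> \<pi> 3" "i' \<noteq> \<pi> 3" for i i'
  proof -
    obtain a where a: "a \<le> 3" "\<pi> a = i" using inv[OF ii(1)] by blast
    obtain a' where a': "a' \<le> 3" "\<pi> a' = i'" using inv[OF ii(2)] by blast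
    have "a \<noteq> 3" "a' \<noteq> 3" "a \<noteq> a'" using a a' ii by auto
    then have "a < 3" "a' < 3" using a(1) a'(1) by auto
    then have "?l a + ?l a' \<le> ?l 1 + ?l 2"
      using mono[of 0 1] mono[of 1 2] \<open>a \<noteq> a'\<close> by (intro pair_le) simp_all
    moreover have "?s i = ?l a" "?s i' = ?l a'" using a a' by (simp_all add: lv_def)
    ultimately show ?thesis using l12 by simp
  qed
  have \<pi>3: "\<pi> 3 \<le> 3"
  proof -
    have "(3::nat) \<in> {..3}" by simp
    then have "\<pi> 3 \<in> {..3}" by (simp only: permutes_in_image[OF \<pi>])
    then show ?thesis by simp
  qed
  have ng': "\<not> ((\<pi> 3 < 3 \<and> \<sigma> (\<pi> 3) = 2) \<or> (0 < \<pi> 3 \<and> \<sigma> (\<pi> 3 - 1) = 2))"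
    using ng by (simp add: good_def)
  have \<sigma>01: "\<And>i. i < 3 \<Longrightarrow> \<sigma> i \<noteq> 2 \<Longrightarrow> \<sigma> i = 0 \<or> \<sigma> i = 1"
    using \<sigma>3 three_cases by blast
  have \<sigma>inj: "\<And>i j. \<sigma> i = \<sigma> j \<Longrightarrow> i = j" using injD[OF permutes_inj[OF \<sigma>]] by blast
  consider (c0) "\<sigma> 0 = 2" "\<sigma> 1 \<noteq> 2" "\<sigma> 2 \<noteq> 2" | (c1) "\<sigma> 0 \<noteq> 2" "\<sigma> 1 = 2" "\<sigma> 2 \<noteq> 2"
    | (c2) "\<sigma> 0 \<noteq> 2" "\<sigma> 1 \<noteq> 2" "\<sigma> 2 = 2"
    using sigma3[OF \<sigma>] by blast
  then show ?thesis
  proof cases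
    case c0
    have "\<sigma> 1 \<noteq> \<sigma> 2" using \<sigma>inj by force
    then have mm: "min (\<omega> 0) (\<omega> 1) = \<omega> (\<sigma> 1) \<and> max (\<omega> 0) (\<omega> 1) = \<omega> (\<sigma> 2)"
      using \<sigma>01[of 1] \<sigma>01[of 2] c0 y12 by (auto simp: min_def max_def)
    note mm1 = mm[THEN conjunct1] and mm2 = mm[THEN conjunct2]
    have p3: "\<pi> 3 \<noteq> 0" "\<pi> 3 \<noteq> 1" using ng' c0 by auto
    from half show ?thesis
    proof (elim disjE)
      assume h: "min (\<omega> 0) (\<omega> 1) \<ge> 1/2"
      have "?s 0 + ?s 1 \<le> ?l 3" using p3 by (intro H2) auto
      then show ?thesis using h mm1 mm2 s0 s1 by linarith
    next
      assume h: "max (\<omega> 0) (\<omega> 1) - min (\<omega> 0) (\<omega> 1) \<ge> 1/2"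
      then show ?thesis using H1[of 2] mm1 mm2 s2 by linarith
    next
      assume h: "1 - max (\<omega> 0) (\<omega> 1) \<ge> 1/2"
      then show ?thesis using H1[of 3] mm1 mm2 s3 by linarith
    qed
  next
    case c1
    have "\<sigma> 0 \<noteq> \<sigma> 2" using \<sigma>inj by force
    then have mm: "min (\<omega> 0) (\<omega> 1) = \<omega> (\<sigma> 0) \<and> max (\<omega> 0) (\<omega> 1) = \<omega> (\<sigma> 2)"
      using \<sigma>01[of 0] \<sigma>01[of 2] c1 y01 y12 by (auto simp: min_def max_def)
    note mm1 = mm[THEN conjunct1] and mm2 = mm[THEN conjunct2]
    have p3: "\<pi> 3 \<noteq> 1" "\<pi> 3 \<noteq> 2" using ng' c1 by auto
    from half show ?thesis
    proof (elim disjE)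
      assume h: "min (\<omega> 0) (\<omega> 1) \<ge> 1/2"
      then show ?thesis using H1[of 0] mm1 mm2 s0 by linarith
    next
      assume h: "max (\<omega> 0) (\<omega> 1) - min (\<omega> 0) (\<omega> 1) \<ge> 1/2"
      have "?s 1 + ?s 2 \<le> ?l 3" using p3 by (intro H2) auto
      then show ?thesis using h mm1 mm2 s1 s2 by linarith
    next
      assume h: "1 - max (\<omega> 0) (\<omega> 1) \<ge> 1/2"
      then show ?thesis using H1[of 3] mm1 mm2 s3 by linarith
    qed
  next
    case c2
    have "\<sigma> 0 \<noteq> \<sigma> 1" using \<sigma>inj by force
    then have mm: "min (\<omega> 0) (\<omega> 1) = \<omega> (\<sigma> 0) \<and> max (\<omega> 0) (\<omega> 1) = \<omega> (\<sigma> 1)"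
      using \<sigma>01[of 0] \<sigma>01[of 1] c2 y01 by (auto simp: min_def max_def)
    note mm1 = mm[THEN conjunct1] and mm2 = mm[THEN conjunct2]
    have p3: "\<pi> 3 \<noteq> 2" "\<pi> 3 \<noteq> 3" using ng' c2 \<pi>3 by auto
    from half show ?thesis
    proof (elim disjE)
      assume h: "min (\<omega> 0) (\<omega> 1) \<ge> 1/2"
      then show ?thesis using H1[of 0] mm1 mm2 s0 by linarith
    next
      assume h: "max (\<omega> 0) (\<omega> 1) - min (\<omega> 0) (\<omega> 1) \<ge> 1/2"
      then show ?thesis using H1[of 1] mm1 mm2 s1 by linarith
    next
      assume h: "1 - max (\<omega> 0) (\<omega> 1) \<ge> 1/2"
      have "?s 2 + ?s 3 \<le> ?l 3" using p3 by (intro H2) auto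
      then show ?thesis using h mm1 mm2 s2 s3 by linarith
    qed
  qed
qed


lemma contain:
  fixes \<omega> :: "nat \<Rightarrow> real"
  assumes b: "\<And>i. \<omega> i \<in> {0..1}" and h: "\<And>m. m \<le> n \<Longrightarrow> \<not> has_triangle (seg_lengths \<omega> m)"
  shows "restrict \<omega> {..<n} \<in> KK n"
proof -
  define x where "x = restrict \<omega> {..<n}"
  have bn: "\<And>i. i < n \<Longrightarrow> \<omega> i \<in> {0..1}" using b by simp
  obtain \<sigma> where \<sigma>: "\<sigma> permutes {..<n}" and srt: "sorted (map (\<lambda>i. \<omega> (\<sigma> i)) [0..<n])"
    and seg: "seg_lengths \<omega> n = map (sp n \<sigma> (restrict \<omega> {..<n})) [0..<Suc n]"
    by (rule sorted_perm[OF bn])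
  have nt: "\<not> has_triangle (map (sp n \<sigma> x) [0..<Suc n])"
    using h[of n] seg by (simp add: x_def)
  obtain \<pi> where \<pi>: "\<pi> permutes {..n}"
    and mono: "\<And>j k. j \<le> k \<Longrightarrow> k \<le> n \<Longrightarrow> lv n \<sigma> \<pi> x j \<le> lv n \<sigma> \<pi> x k"
    and ddnn: "\<And>j. j \<le> n \<Longrightarrow> 0 \<le> dd n \<sigma> \<pi> x j"
    and inc: "x \<in> fcone n \<sigma> \<pi> (cw n)"
    and lsum: "(\<Sum>j\<le>n. lv n \<sigma> \<pi> x j) = 1"
    using fib_cone[OF \<sigma> srt bn x_def nt] by blast
  have PQ: "(\<sigma>, \<pi>) \<in> PP n \<times> QQ n" using \<sigma> \<pi> by (simp add: PP_def QQ_def)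
  show ?thesis
  proof (cases "n = 3")
    case False
    have "x \<in> (\<Union>p\<in>PP n \<times> QQ n. fcone n (fst p) (snd p) (cw n))"
      using PQ inc by (intro UN_I[of "(\<sigma>, \<pi>)"]) simp_all
    then show ?thesis using False by (simp add: KK_def x_def)
  next
    case True
    have "x \<in> fcone 3 \<sigma> \<pi> (w3 \<sigma> \<pi>)"
    proof (cases "good \<sigma> \<pi>")
      case True
      have "w3 \<sigma> \<pi> = cw 3" using True by (simp add: w3_def fun_eq_iff)
      then show ?thesis using inc \<open>n = 3\<close> by simp
    next
      case False
      have \<sigma>3: "\<sigma> permutes {..<3}" and \<pi>3: "\<pi> permutes {..3}" using \<sigma> \<pi> \<open>n = 3\<close> by simp_all
      have half: "lv 3 \<sigma> \<pi> x 3 \<ge> 1/2"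
        using n3_half[OF \<sigma>3 \<pi>3 _ _ _ _ _ _ False, of \<omega> x] srt bn mono ddnn[of 3] h[of 2] x_def \<open>n = 3\<close>
        by simp
      have ls: "lv 3 \<sigma> \<pi> x 0 + lv 3 \<sigma> \<pi> x 1 + lv 3 \<sigma> \<pi> x 2 + lv 3 \<sigma> \<pi> x 3 = 1"
        using lsum \<open>n = 3\<close> by (simp add: numeral_eq_Suc atMost_Suc add_ac)
      have ws: "w3 \<sigma> \<pi> 0 = 8" "w3 \<sigma> \<pi> 1 = 4" "w3 \<sigma> \<pi> 2 = 2"
        using False by (simp_all add: w3_def cw_def GG_vals)
      have "(\<Sum>j<3. w3 \<sigma> \<pi> j * dd 3 \<sigma> \<pi> x j)
          = w3 \<sigma> \<pi> 0 * dd 3 \<sigma> \<pi> x 0 + w3 \<sigma> \<pi> 1 * dd 3 \<sigma> \<pi> x 1 + w3 \<sigma> \<pi> 2 * dd 3 \<sigma> \<pi> x 2"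
        by (simp add: numeral_eq_Suc lessThan_Suc)
      also have "\<dots> = 2 * (lv 3 \<sigma> \<pi> x 0 + lv 3 \<sigma> \<pi> x 1 + lv 3 \<sigma> \<pi> x 2)"
        unfolding ws by (simp add: dd_def algebra_simps)
      also have "\<dots> \<le> 1" using ls half apply (simp add: algebra_simps) done
      finally have "(\<Sum>j<3. w3 \<sigma> \<pi> j * dd 3 \<sigma> \<pi> x j) \<le> 1" .
      then show ?thesis using inc ddnn \<open>n = 3\<close> by (simp add: fcone_def)
    qed
    then have "x \<in> (\<Union>p\<in>PP 3 \<times> QQ 3. fcone 3 (fst p) (snd p) (w3 (fst p) (snd p)))"
      using PQ \<open>n = 3\<close> by (intro UN_I[of "(\<sigma>, \<pi>)"]) simp_all
    then show ?thesis using True by (simp add: KK_def x_def)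
  qed
qed


definition PG :: "nat \<Rightarrow> real" where "PG n = (\<Prod>j<n. cw n j)"

lemma PG_Suc: "PG (Suc n) = real (GG (Suc n)) * PG n"
proof -
  have "PG (Suc n) = cw (Suc n) 0 * (\<Prod>j<n. cw (Suc n) (Suc j))"
    unfolding PG_def by (rule prod.lessThan_Suc_shift)
  also have "(\<Prod>j<n. cw (Suc n) (Suc j)) = PG n"
    unfolding PG_def by (intro prod.cong) (auto simp: cw_def)
  finally show ?thesis by (simp add: cw_def)
qed

lemma PG_0: "PG 0 = 1" by (simp add: PG_def)

lemma GG_more: "GG 4 = 12" "GG 5 = 20" "GG 6 = 33" "GG 7 = 54" "GG 8 = 88" "GG 9 = 143"
  by (simp_all add: numeral_eq_Suc)

lemma PG_vals: "PG 1 = 2" "PG 2 = 8" "PG 3 = 56" "PG 4 = 672" "PG 5 = 13440" "PG 6 = 443520"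
  "PG 7 = 23950080" "PG 8 = 2107607040" "PG 9 = 301387806720"
proof -
  have s: "\<And>k. PG (numeral k) = real (GG (numeral k)) * PG (pred_numeral k)"
    by (simp add: numeral_eq_Suc PG_Suc)
  show "PG 1 = 2" using PG_Suc[of 0] by (simp add: PG_0 GG_vals)
  then show "PG 2 = 8" using s[of "num.Bit0 num.One"] by (simp add: GG_vals)
  then show "PG 3 = 56" using s[of "num.Bit1 num.One"] by (simp add: GG_vals)
  then show "PG 4 = 672" using s[of "num.Bit0 (num.Bit0 num.One)"] by (simp add: GG_more)
  then show "PG 5 = 13440" using s[of "num.Bit1 (num.Bit0 num.One)"] by (simp add: GG_more)
  then show "PG 6 = 443520" using s[of "num.Bit0 (num.Bit1 num.One)"] by (simp add: GG_more)
  then show "PG 7 = 23950080" using s[of "num.Bit1 (num.Bit1 num.One)"] by (simp add: GG_more)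
  then show "PG 8 = 2107607040" using s[of "num.Bit0 (num.Bit0 (num.Bit0 num.One))"] by (simp add: GG_more)
  then show "PG 9 = 301387806720" using s[of "num.Bit1 (num.Bit0 (num.Bit0 num.One))"] by (simp add: GG_more)
qed

lemma fibo_ge1: "fibo (Suc n) \<ge> 1"
  by (induction n rule: fibo.induct) auto

lemma GG_lin: "GG (m + 4) \<ge> 2 * (m + 4) + 4"
proof (induction m)
  case 0 then show ?case using GG_more by simp
next
  case (Suc m)
  have "fibo (Suc (Suc (m + 4))) \<ge> 2"
    using fibo_ge1[of "m + 4"] fibo_ge1[of "m + 3"] by (simp add: numeral_eq_Suc)
  have ee: "Suc m + 4 = Suc (m + 4)" by simp
  have e: "GG (Suc m + 4) = GG (m + 4) + fibo (Suc (Suc (m + 4)))" unfolding ee by (simp only: GG.simps)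
  show ?case unfolding e using Suc \<open>fibo (Suc (Suc (m + 4))) \<ge> 2\<close> by simp
qed

definition bnd :: "nat \<Rightarrow> real" where
  "bnd n = (if n = 3 then 45 / 112 else fact (Suc n) / PG n)"

lemma PG_pos: "PG n > 0" unfolding PG_def by (rule cw_prod)

lemma bnd_step:
  assumes "n \<ge> 9"
  shows "bnd (Suc n) \<le> bnd n / 2"
proof -
  have g: "real (GG (Suc n)) \<ge> 2 * (real n + 2)"
    using GG_lin[of "n - 3"] assms by simp
  have "bnd (Suc n) = fact (Suc (Suc n)) / (real (GG (Suc n)) * PG n)"
    using assms by (simp add: bnd_def PG_Suc)
  also have "\<dots> = bnd n * ((real n + 2) / real (GG (Suc n)))"
    using assms by (simp add: bnd_def field_simps)
  also have "\<dots> \<le> bnd n * (1 / 2)"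
  proof (rule mult_left_mono)
    show "(real n + 2) / real (GG (Suc n)) \<le> 1 / 2" using g GG_pos[of "Suc n"]
      by (simp add: divide_simps)
    show "0 \<le> bnd n" using PG_pos[of n] by (simp add: bnd_def)
  qed
  finally show ?thesis by simp
qed

lemma bnd_tail: "n \<ge> 9 \<Longrightarrow> bnd n \<le> bnd 9 * (1/2) ^ (n - 9)"
proof (induction n rule: dec_induct)
  case base then show ?case by simp
next
  case (step n)
  have "bnd (Suc n) \<le> bnd n / 2" using bnd_step[OF step(1)] .
  also have "\<dots> \<le> bnd 9 * (1/2) ^ (n - 9) / 2" using step(3) by simp
  also have "\<dots> = bnd 9 * (1/2) ^ (Suc n - 9)"
  proof -
    have "Suc n - 9 = Suc (n - 9)" using step(1) by simp
    then show ?thesis by simp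
  qed
  finally show ?case .
qed

lemma bnd_nonneg: "bnd n \<ge> 0" using PG_pos[of n] by (simp add: bnd_def)

lemma bnd_first: "(\<Sum>i<9. bnd i) + bnd 9 * 2 \<le> 3.398"
proof -
  have e: "(\<Sum>i<9. bnd i) = bnd 0 + bnd 1 + bnd 2 + bnd 3 + bnd 4 + bnd 5 + bnd 6 + bnd 7 + bnd 8"
    by (simp add: numeral_eq_Suc lessThan_Suc)
  show ?thesis unfolding e
    using PG_vals(1) by (simp add: bnd_def PG_vals PG_0 fact_numeral)
qed

lemma bnd_sum: "(\<Sum>n. ennreal (bnd n)) \<le> ennreal 3.398"
proof -
  define b' where "b' n = (if n < 9 then bnd n else bnd 9 * (1/2) ^ (n - 9))" for n
  have le: "bnd n \<le> b' n" for n
    using bnd_tail[of n] by (cases "n < 9") (simp_all add: b'_def)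
  have nn: "0 \<le> b' n" for n using bnd_nonneg by (simp add: b'_def)
  have g: "(\<lambda>i. b' (i + 9)) sums (bnd 9 * 2)"
  proof -
    have "(\<lambda>i. (1/2::real) ^ i) sums (1 / (1 - 1/2))" by (rule geometric_sums) simp
    then have "(\<lambda>i. bnd 9 * (1/2::real) ^ i) sums (bnd 9 * (1 / (1 - 1/2)))" by (rule sums_mult)
    then show ?thesis by (simp add: b'_def)
  qed
  then have s: "b' sums (bnd 9 * 2 + (\<Sum>i<9. b' i))" by (simp add: sums_iff_shift)
  have s9: "(\<Sum>i<9. b' i) = (\<Sum>i<9. bnd i)" by (intro sum.cong) (simp_all add: b'_def)
  have "(\<Sum>n. ennreal (bnd n)) \<le> (\<Sum>n. ennreal (b' n))"
    by (intro suminf_le summableI) (simp add: le ennreal_leI)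
  also have "\<dots> = ennreal (\<Sum>n. b' n)"
    using nn s by (intro suminf_ennreal2) (auto simp: sums_iff)
  also have "(\<Sum>n. b' n) = bnd 9 * 2 + (\<Sum>i<9. bnd i)" using s s9 by (simp add: sums_iff)
  also have "ennreal \<dots> \<le> ennreal 3.398" using bnd_first by (intro ennreal_leI) simp
  finally show ?thesis .
qed


definition AA :: "nat \<Rightarrow> (nat \<Rightarrow> real) set" where
  "AA n = {\<omega> \<in> space break_space. restrict \<omega> {..<n} \<in> KK n}"

lemma space_break: "space break_space = UNIV"
  by (simp add: break_space_def space_PiM)

lemma AA_sets: "AA n \<in> sets break_space"
proof -
  have m: "(\<lambda>\<omega>. restrict \<omega> {..<n}) \<in> measurable break_space (PiM {..<n} (\<lambda>_. UU))"
    unfolding break_space_def by (rule measurable_restrict_subset) simp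
  have "sets (PiM {..<n} (\<lambda>_. UU)) = sets (LL {..<n})" by (rule sets_PiM_cong) simp_all
  then have K: "KK n \<in> sets (PiM {..<n} (\<lambda>_. UU))" using KK_sets by simp
  have "AA n = (\<lambda>\<omega>. restrict \<omega> {..<n}) -` KK n \<inter> space break_space"
    by (auto simp: AA_def)
  also have "\<dots> \<in> sets break_space" by (rule measurable_sets[OF m K])
  finally show ?thesis .
qed

lemma AA_bound: "emeasure break_space (AA n) \<le> ennreal (bnd n)"
proof -
  have "emeasure break_space (AA n) \<le> emeasure (LL {..<n}) (KK n)"
    unfolding AA_def by (rule break_restrict[OF KK_sets])
  also have "\<dots> \<le> ennreal (bnd n)"
  proof (cases "n = 3")
    case True then show ?thesis using KK3_bound by (simp add: bnd_def)
  next
    case False then show ?thesis using KK_bound[OF False] by (simp add: bnd_def PG_def)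
  qed
  finally show ?thesis .
qed

lemma pointwise:
  assumes b: "\<And>i. \<omega> i \<in> {0..1}"
  shows "stop_time \<omega> \<le> (\<Sum>n. indicator (AA n) \<omega>)"
proof -
  have inA: "\<omega> \<in> AA n" if "\<And>m. m \<le> n \<Longrightarrow> \<not> has_triangle (seg_lengths \<omega> m)" for n
    using contain[OF b that] by (simp add: AA_def space_break)
  have part: "of_nat N \<le> (\<Sum>n. indicator (AA n) \<omega> :: ennreal)"
    if N: "\<And>n. n < N \<Longrightarrow> \<omega> \<in> AA n" for N
  proof -
    have "of_nat N = (\<Sum>n<N. indicator (AA n) \<omega> :: ennreal)"
      using N by (simp add: indicator_def)
    also have "\<dots> \<le> (\<Sum>n. indicator (AA n) \<omega>)"
      by (rule sum_le_suminf) simp_all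
    finally show ?thesis .
  qed
  show ?thesis
  proof (cases "\<exists>n. has_triangle (seg_lengths \<omega> n)")
    case True
    define N where "N = (LEAST n. has_triangle (seg_lengths \<omega> n))"
    have "\<omega> \<in> AA n" if "n < N" for n
    proof (rule inA)
      fix m assume "m \<le> n"
      then have "m < N" using that by simp
      then show "\<not> has_triangle (seg_lengths \<omega> m)" unfolding N_def by (rule not_less_Least)
    qed
    then have "of_nat N \<le> (\<Sum>n. indicator (AA n) \<omega> :: ennreal)" by (rule part)
    then show ?thesis using True by (simp add: stop_time_def N_def)
  next
    case False
    then have "\<omega> \<in> AA n" for n by (intro inA) auto
    then have "of_nat N \<le> (\<Sum>n. indicator (AA n) \<omega> :: ennreal)" for N by (intro part)
    then have "(\<Sum>n. indicator (AA n) \<omega> :: ennreal) = \<infinity>"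
    proof -
      have "(SUP N. of_nat N :: ennreal) \<le> (\<Sum>n. indicator (AA n) \<omega>)"
        by (rule SUP_least) (rule \<open>\<And>N. of_nat N \<le> (\<Sum>n. indicator (AA n) \<omega> :: ennreal)\<close>)
      then show ?thesis unfolding ennreal_SUP_of_nat_eq_top by (simp add: top_unique)
    qed
    then show ?thesis by simp
  qed
qed

theorem mainTheorem11:
  shows "(\<integral>\<^sup>+ \<omega>. stop_time \<omega> \<partial>break_space) \<le> ennreal 3.398"
proof -
  have "(\<integral>\<^sup>+ \<omega>. stop_time \<omega> \<partial>break_space) \<le> (\<integral>\<^sup>+ \<omega>. (\<Sum>n. indicator (AA n) \<omega>) \<partial>break_space)"
  proof (rule nn_integral_mono_AE)
    show "AE \<omega> in break_space. stop_time \<omega> \<le> (\<Sum>n. indicator (AA n) \<omega>)"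
      using AE_cube
    proof (rule eventually_mono)
      fix \<omega> :: "nat \<Rightarrow> real" assume "\<forall>i. \<omega> i \<in> {0..1}"
      then show "stop_time \<omega> \<le> (\<Sum>n. indicator (AA n) \<omega>)" by (intro pointwise) blast
    qed
  qed
  also have "\<dots> = (\<Sum>n. \<integral>\<^sup>+ \<omega>. indicator (AA n) \<omega> \<partial>break_space)"
    by (rule nn_integral_suminf) (rule borel_measurable_indicator[OF AA_sets])
  also have "\<dots> = (\<Sum>n. emeasure break_space (AA n))"
    by (simp add: AA_sets)
  also have "\<dots> \<le> (\<Sum>n. ennreal (bnd n))"
    by (intro suminf_le summableI AA_bound)
  also have "\<dots> \<le> ennreal 3.398" by (rule bnd_sum)
  finally show ?thesis .
qed


end
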